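(* Let ${\cal H}\subset{\cal H}_0$, ${\mathcal D}$, $b$, $\mu_\ell^{-1}$, $\epsilon_\ell$, $a_\ell$, ${\mathcal A}_\ell$ ($\ell=1,2$) be as in the context (in particular, the standing assumptions there hold). Let $({\cal H}_N)_{N=1}^\infty$ be finite-dimensional subspaces of ${\cal H}$, and for each $N$ let $\mathsf{A}_1,\mathsf{A}_2$ be the associated Galerkin matrices and $\mathsf{D}$, $m_\pm$ as in the context. Suppose ${\mathcal A}_1:{\cal H}\to{\cal H}^*$ is invertible and there exists $C_1>0$ such that for all $N\in\mathbb{Z}^+$ $$\inf_{u_N\in {\cal H}_N\setminus\{0\}} \sup_{v_N\in {\cal H}_N\setminus\{0\}} \frac{|a_1(u_N,v_N)|}{\|u_N\|_{{\cal H}}\|v_N\|_{{\cal H}}}\geq \frac{1}{C_1\|{\mathcal A}_1^{-1}\|_{{\cal H}^*\to{\cal H}}}$$ and, for all $v_N\in{\cal H}_N\setminus\{0\}$, $\sup_{u_N\in{\cal H}_N\setminus\{0\}}|a_1(u_N,v_N)|>0$. If $$\Big(\|\mu_1^{-1}-\mu_2^{-1}\|_{{\cal H}_0\to{\cal H}_0}+\|\epsilon_1-\epsilon_2\|_{{\cal H}_0\to{\cal H}_0}\Big)C_1\|{\mathcal A}_1^{-1}\|_{{\cal H}^*\to{\cal H}}\leq \tfrac12,$$ then $\mathsf{A}_2^{-1}$ exists and $$\max\Big\{\|\mathsf{I}-\mathsf{A}_2^{-1}\mathsf{A}_1\|_{\mathsf{D}},\ \|\mathsf{I}-\mathsf{A}_1\mathsf{A}_2^{-1}\|_{\mathsf{D}^{-1}}\Big\}\leq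 2\Big(\|\mu_1^{-1}-\mu_2^{-1}\|_{{\cal H}_0\to{\cal H}_0}+\|\epsilon_1-\epsilon_2\|_{{\cal H}_0\to{\cal H}_0}\Big)C_1\|{\mathcal A}_1^{-1}\|_{{\cal H}^*\to{\cal H}}.$$ Furthermore, if $\mu_1=\mu_2$, then $$\max\Big\{\|\mathsf{I}-\mathsf{A}_2^{-1}\mathsf{A}_1\|_2,\ \|\mathsf{I}-\mathsf{A}_1\mathsf{A}_2^{-1}\|_2\Big\}\leq 2\frac{m_+}{m_-}\|\epsilon_1-\epsilon_2\|_{{\cal H}_0\to{\cal H}_0}C_1\|{\mathcal A}_1^{-1}\|_{{\cal H}^*\to{\cal H}}.$$
   Context: Standing assumptions: ${\cal H}\subset{\cal H}_0$ are complex Hilbert spaces with $\|v\|_{{\cal H}_0}\le\|v\|_{{\cal H}}$ for $v\in{\cal H}$, and ${\cal H}_0$ is identified with its dual so that ${\cal H}\subset{\cal H}_0\subset{\cal H}^*$. ${\mathcal D}:{\cal H}\to{\cal H}_0$ is linear with $\|{\mathcal D}\|_{{\cal H}\to{\cal H}_0}\le 1$; $b(\cdot,\cdot)$ is a continuous sesquilinear form on ${\cal H}$; for $\ell=1,2$, $\mu_\ell^{-1}:{\cal H}_0\to{\cal H}_0$ and $\epsilon_\ell:{\cal H}_0\to{\cal H}_0$ are bounded linear operators, and $a_\ell(u,v):=(\mu_\ell^{-1}{\mathcal D}u,{\mathcal D}v)_{{\cal H}_0}+b(u,v)-(\epsilon_\ell u,v)_{{\cal H}_0}$. For $\ell=1,2$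 there exist $C_{{\rm G1},\ell},C_{{\rm G2},\ell}>0$ with $|a_\ell(v,v)+C_{{\rm G2},\ell}\|v\|_{{\cal H}_0}^2|\ge C_{{\rm G1},\ell}\|v\|_{{\cal H}}^2$ for all $v\in{\cal H}$. ${\mathcal A}_\ell:{\cal H}\to{\cal H}^*$ is defined by $\langle{\mathcal A}_\ell u,v\rangle_{{\cal H}^*\times{\cal H}}=a_\ell(u,v)$. Discrete notation: ${\cal H}_N\subset{\cal H}$ has basis $\{\phi_j\}_{j=1}^N$; $(\mathsf{A}_\ell)_{ij}=a_\ell(\phi_j,\phi_i)$. $\mathsf{D}$ is the Hermitian positive-definite matrix such that, writing $\|\mathbf V\|_{\mathsf D}:=(\mathsf D\mathbf V,\mathbf V)_2^{1/2}$, one has $\|\sum_j V_j\phi_j\|_{{\cal H}}=\|\mathbf V\|_{\mathsf D}$ for all $\mathbf V\in\mathbb{C}^N$; $\|\mathbf V\|_{\mathsf D^{-1}}:=(\mathsf D^{-1}\mathbf V,\mathbf V)_2^{1/2}$; matrix norms $\|\cdot\|_{\mathsf D}$, $\|\cdot\|_{\mathsf D^{-1}}$, $\|\cdot\|_2$ are those induced by the corresponding vector norms ($\|\cdot\|_2$ Euclidean). $m_\pm>0$ are such that $m_-\|\mathbf V\|_2\le\|\sum_jV_j\phi_j\|_{{\cal H}_0}\le m_+\|\mathbf V\|_2$ for all $\mathbf V\in\mathbb{C}^N$. *)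

theory Defs
  imports "Jordan_Normal_Form.Matrix" "HOL-Library.Extended_Real"
begin

text \<open>Complex vector spaces are modelled as a type 'a (the space H0) with a
  complex scalar multiplication sc satisfying the axioms of the HOL locale
  vector_space.  Subspaces are sets of 'a.\<close>

definition ipnorm :: "('a \<Rightarrow> 'a \<Rightarrow> complex) \<Rightarrow> 'a \<Rightarrow> real" where
  "ipnorm ip x = sqrt (Re (ip x x))"

definition cinner_on :: "(complex \<Rightarrow> 'a::ab_group_add \<Rightarrow> 'a) \<Rightarrow> 'a set \<Rightarrow> ('a \<Rightarrow> 'a \<Rightarrow> complex) \<Rightarrow> bool" where
  "cinner_on sc S ip \<longleftrightarrow> module.subspace sc S \<and>
     (\<forall>x\<in>S. \<forall>y\<in>S. \<forall>z\<in>S. ip (x + y) z = ip x z + ip y z) \<and>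
     (\<forall>c. \<forall>x\<in>S. \<forall>y\<in>S. ip (sc c x) y = c * ip x y) \<and>
     (\<forall>x\<in>S. \<forall>y\<in>S. ip y x = cnj (ip x y)) \<and>
     (\<forall>x\<in>S. 0 \<le> Re (ip x x)) \<and>
     (\<forall>x\<in>S. ip x x = 0 \<longrightarrow> x = 0)"

definition complete_on :: "'a::ab_group_add set \<Rightarrow> ('a \<Rightarrow> 'a \<Rightarrow> complex) \<Rightarrow> bool" where
  "complete_on S ip \<longleftrightarrow> (\<forall>X. (\<forall>n. X n \<in> S) \<and>
       (\<forall>e>0. \<exists>M. \<forall>m\<ge>M. \<forall>n\<ge>M. ipnorm ip (X m - X n) < e)
     \<longrightarrow> (\<exists>L\<in>S. (\<lambda>n. ipnorm ip (X n - L)) \<longlonglongrightarrow> 0))"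

definition hilbert_on :: "(complex \<Rightarrow> 'a::ab_group_add \<Rightarrow> 'a) \<Rightarrow> 'a set \<Rightarrow> ('a \<Rightarrow> 'a \<Rightarrow> complex) \<Rightarrow> bool" where
  "hilbert_on sc S ip \<longleftrightarrow> cinner_on sc S ip \<and> complete_on S ip"

definition clinear_on :: "(complex \<Rightarrow> 'a::ab_group_add \<Rightarrow> 'a) \<Rightarrow> 'a set \<Rightarrow> ('a \<Rightarrow> 'a) \<Rightarrow> bool" where
  "clinear_on sc S f \<longleftrightarrow> (\<forall>x\<in>S. \<forall>y\<in>S. f (x + y) = f x + f y) \<and>
     (\<forall>c. \<forall>x\<in>S. f (sc c x) = sc c (f x))"

definition bounded_op :: "'a set \<Rightarrow> ('a \<Rightarrow> real) \<Rightarrow> ('b \<Rightarrow> real) \<Rightarrow> ('a \<Rightarrow> 'b) \<Rightarrow> bool" where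
  "bounded_op S nS nT f \<longleftrightarrow> (\<exists>K. \<forall>x\<in>S. nT (f x) \<le> K * nS x)"

definition op_norm :: "'a set \<Rightarrow> ('a \<Rightarrow> real) \<Rightarrow> ('b \<Rightarrow> real) \<Rightarrow> ('a \<Rightarrow> 'b) \<Rightarrow> real" where
  "op_norm S nS nT f = Sup {nT (f x) | x. x \<in> S \<and> nS x \<le> 1}"

definition bdd_sesq_on :: "(complex \<Rightarrow> 'a::ab_group_add \<Rightarrow> 'a) \<Rightarrow> 'a set \<Rightarrow> ('a \<Rightarrow> real) \<Rightarrow> ('a \<Rightarrow> 'a \<Rightarrow> complex) \<Rightarrow> bool" where
  "bdd_sesq_on sc S nS b \<longleftrightarrow>
     (\<forall>x\<in>S. \<forall>y\<in>S. \<forall>z\<in>S. b (x + y) z = b x z + b y z \<and> b z (x + y) = b z x + b z y) \<and>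
     (\<forall>c. \<forall>x\<in>S. \<forall>y\<in>S. b (sc c x) y = c * b x y \<and> b x (sc c y) = cnj c * b x y) \<and>
     (\<exists>K. \<forall>x\<in>S. \<forall>y\<in>S. cmod (b x y) \<le> K * nS x * nS y)"

text \<open>The dual space H*: bounded conjugate-linear functionals on S
  (so that the H0 inner product (u, .) is an element of H*), with the dual norm.\<close>
definition dual_elem :: "(complex \<Rightarrow> 'a::ab_group_add \<Rightarrow> 'a) \<Rightarrow> 'a set \<Rightarrow> ('a \<Rightarrow> real) \<Rightarrow> ('a \<Rightarrow> complex) \<Rightarrow> bool" where
  "dual_elem sc S nS f \<longleftrightarrow> (\<forall>x\<in>S. \<forall>y\<in>S. f (x + y) = f x + f y) \<and>
     (\<forall>c. \<forall>x\<in>S. f (sc c x) = cnj c * f x) \<and>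
     (\<exists>K. \<forall>x\<in>S. cmod (f x) \<le> K * nS x)"

definition dual_norm :: "'a set \<Rightarrow> ('a \<Rightarrow> real) \<Rightarrow> ('a \<Rightarrow> complex) \<Rightarrow> real" where
  "dual_norm S nS f = Sup {cmod (f x) | x. x \<in> S \<and> nS x \<le> 1}"

definition aform :: "('a \<Rightarrow> 'a \<Rightarrow> complex) \<Rightarrow> ('a \<Rightarrow> 'a) \<Rightarrow> ('a \<Rightarrow> 'a \<Rightarrow> complex)
    \<Rightarrow> ('a \<Rightarrow> 'a) \<Rightarrow> ('a \<Rightarrow> 'a) \<Rightarrow> 'a \<Rightarrow> 'a \<Rightarrow> complex" where
  "aform ip0 D b muinv eps u v = ip0 (muinv (D u)) (D v) + b u v - ip0 (eps u) v"

text \<open>The operator A : H \<rightarrow> H*, A u = a(u, .), is invertible (as a bounded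
  operator H \<rightarrow> H*): bijective onto H* with bounded inverse.\<close>
definition form_op_invertible :: "(complex \<Rightarrow> 'a::ab_group_add \<Rightarrow> 'a) \<Rightarrow> 'a set \<Rightarrow> ('a \<Rightarrow> real)
    \<Rightarrow> ('a \<Rightarrow> 'a \<Rightarrow> complex) \<Rightarrow> bool" where
  "form_op_invertible sc S nS a \<longleftrightarrow>
     (\<forall>f. dual_elem sc S nS f \<longrightarrow> (\<exists>!u. u \<in> S \<and> (\<forall>v\<in>S. a u v = f v))) \<and>
     (\<exists>K. \<forall>u\<in>S. nS u \<le> K * dual_norm S nS (\<lambda>v. a u v))"

definition form_op_inv :: "'a set \<Rightarrow> ('a \<Rightarrow> 'a \<Rightarrow> complex) \<Rightarrow> ('a \<Rightarrow> complex) \<Rightarrow> 'a" where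
  "form_op_inv S a f = (THE u. u \<in> S \<and> (\<forall>v\<in>S. a u v = f v))"

definition form_op_inv_norm :: "(complex \<Rightarrow> 'a::ab_group_add \<Rightarrow> 'a) \<Rightarrow> 'a set \<Rightarrow> ('a \<Rightarrow> real)
    \<Rightarrow> ('a \<Rightarrow> 'a \<Rightarrow> complex) \<Rightarrow> real" where
  "form_op_inv_norm sc S nS a =
     Sup {nS (form_op_inv S a f) | f. dual_elem sc S nS f \<and> dual_norm S nS f \<le> 1}"

text \<open>Discrete objects. phi N j (j < N) is the basis of H_N (0-based indices).\<close>
definition combo :: "(complex \<Rightarrow> 'a::ab_group_add \<Rightarrow> 'a) \<Rightarrow> (nat \<Rightarrow> 'a) \<Rightarrow> complex vec \<Rightarrow> 'a" where
  "combo sc ph V = (\<Sum>j<dim_vec V. sc (V $ j) (ph j))"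

definition galerkin_space :: "(complex \<Rightarrow> 'a::ab_group_add \<Rightarrow> 'a) \<Rightarrow> (nat \<Rightarrow> 'a) \<Rightarrow> nat \<Rightarrow> 'a set" where
  "galerkin_space sc ph N = {combo sc ph V | V. V \<in> carrier_vec N}"

definition galerkin_mat :: "('a \<Rightarrow> 'a \<Rightarrow> complex) \<Rightarrow> (nat \<Rightarrow> 'a) \<Rightarrow> nat \<Rightarrow> complex mat" where
  "galerkin_mat a ph N = mat N N (\<lambda>(i, j). a (ph j) (ph i))"

definition ip2 :: "complex vec \<Rightarrow> complex vec \<Rightarrow> complex" where
  "ip2 V W = (\<Sum>i<dim_vec V. V $ i * cnj (W $ i))"

definition hermitian_pd :: "nat \<Rightarrow> complex mat \<Rightarrow> bool" where
  "hermitian_pd n M \<longleftrightarrow> M \<in> carrier_mat n n \<and>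
     (\<forall>i<n. \<forall>j<n. M $$ (i, j) = cnj (M $$ (j, i))) \<and>
     (\<forall>V\<in>carrier_vec n. V \<noteq> 0\<^sub>v n \<longrightarrow> 0 < Re (ip2 (M *\<^sub>v V) V))"

definition mat_inv :: "nat \<Rightarrow> complex mat \<Rightarrow> complex mat" where
  "mat_inv n A = (SOME B. B \<in> carrier_mat n n \<and> A * B = 1\<^sub>m n \<and> B * A = 1\<^sub>m n)"

definition wnorm :: "complex mat \<Rightarrow> complex vec \<Rightarrow> real" where
  "wnorm M V = sqrt (Re (ip2 (M *\<^sub>v V) V))"

definition induced_norm :: "nat \<Rightarrow> complex mat \<Rightarrow> complex mat \<Rightarrow> real" where
  "induced_norm n M A = Sup {wnorm M (A *\<^sub>v V) | V. V \<in> carrier_vec n \<and> wnorm M V \<le> 1}"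

definition norm2 :: "complex vec \<Rightarrow> real" where
  "norm2 V = sqrt (Re (ip2 V V))"

definition induced_norm2 :: "nat \<Rightarrow> complex mat \<Rightarrow> real" where
  "induced_norm2 n A = Sup {norm2 (A *\<^sub>v V) | V. V \<in> carrier_vec n \<and> norm2 V \<le> 1}"

end

theory Submission
  imports Defs "Jordan_Normal_Form.Determinant"
begin

lemma cs_arith:
  fixes sxx sxy syy :: complex
  assumes H: "\<And>c. 0 \<le> Re sxx + 2 * Re (cnj c * sxy) + (cmod c)\<^sup>2 * Re syy"
    and y: "0 \<le> Re syy"
  shows "(cmod sxy)\<^sup>2 \<le> Re sxx * Re syy"
proof (cases "Re syy = 0")
  case True
  have x0: "0 \<le> Re sxx" using H[of 0] by simp
  show ?thesis
  proof (rule ccontr)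
    assume "\<not> ?thesis"
    then have p: "(cmod sxy)\<^sup>2 > 0" using True by simp
    define t where "t = (Re sxx + 1) / (2 * (cmod sxy)\<^sup>2)"
    have cc: "cnj sxy * sxy = of_real ((cmod sxy)\<^sup>2)"
      using complex_norm_square[of sxy] by (simp add: mult.commute)
    have "Re (cnj (- of_real t * sxy) * sxy) = - t * (cmod sxy)\<^sup>2"
      using cc by (simp add: mult.assoc)
    then have "0 \<le> Re sxx - 2 * t * (cmod sxy)\<^sup>2" using H[of "- of_real t * sxy"] True by simp
    moreover have "2 * t * (cmod sxy)\<^sup>2 = Re sxx + 1" using p unfolding t_def by (simp add: field_simps)
    ultimately show False by simp
  qed
next
  case False
  then have r: "Re syy > 0" using y by simp
  define c where "c = - sxy / of_real (Re syy)"
  have cc: "cnj sxy * sxy = of_real ((cmod sxy)\<^sup>2)"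
    using complex_norm_square[of sxy] by (simp add: mult.commute)
  have "cnj c * sxy = - (cnj sxy * sxy) / of_real (Re syy)"
    unfolding c_def by simp
  then have e1: "Re (cnj c * sxy) = - (cmod sxy)\<^sup>2 / Re syy"
    unfolding cc by (simp add: Re_divide_of_real)
  have e2: "(cmod c)\<^sup>2 = (cmod sxy)\<^sup>2 / (Re syy)\<^sup>2"
    unfolding c_def using r by (simp add: norm_divide power_divide)
  have "0 \<le> Re sxx - (cmod sxy)\<^sup>2 / Re syy"
    using H[of c] unfolding e1 e2 using r by (simp add: power2_eq_square field_simps)
  then show ?thesis using r by (simp add: field_simps)
qed

locale cvs = vector_space sc for sc :: "complex \<Rightarrow> 'a::ab_group_add \<Rightarrow> 'a"
begin

lemma cip_sub: "cinner_on sc S ip \<Longrightarrow> subspace S"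
  unfolding cinner_on_def by (simp add: subspace_def)

lemma cip_add_l: "cinner_on sc S ip \<Longrightarrow> x \<in> S \<Longrightarrow> y \<in> S \<Longrightarrow> z \<in> S \<Longrightarrow> ip (x + y) z = ip x z + ip y z"
  unfolding cinner_on_def by blast
lemma cip_scale_l: "cinner_on sc S ip \<Longrightarrow> x \<in> S \<Longrightarrow> y \<in> S \<Longrightarrow> ip (sc c x) y = c * ip x y"
  unfolding cinner_on_def by blast
lemma cip_conj: "cinner_on sc S ip \<Longrightarrow> x \<in> S \<Longrightarrow> y \<in> S \<Longrightarrow> ip y x = cnj (ip x y)"
  unfolding cinner_on_def by blast
lemma cip_pos: "cinner_on sc S ip \<Longrightarrow> x \<in> S \<Longrightarrow> 0 \<le> Re (ip x x)"
  unfolding cinner_on_def by blast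
lemma cip_def0: "cinner_on sc S ip \<Longrightarrow> x \<in> S \<Longrightarrow> ip x x = 0 \<Longrightarrow> x = 0"
  unfolding cinner_on_def by blast

end

context cvs begin
lemma cip_add_r: assumes "cinner_on sc S ip" "x \<in> S" "y \<in> S" "z \<in> S"
  shows "ip x (y + z) = ip x y + ip x z"
proof -
  have s: "subspace S" using cip_sub[OF assms(1)] .
  have "ip x (y + z) = cnj (ip (y + z) x)" using cip_conj[OF assms(1) subspace_add[OF s assms(3,4)] assms(2)] .
  also have "\<dots> = cnj (ip y x) + cnj (ip z x)" using cip_add_l[OF assms(1) assms(3,4,2)] by simp
  also have "\<dots> = ip x y + ip x z" using cip_conj[OF assms(1) assms(2) assms(3)] cip_conj[OF assms(1) assms(2) assms(4)] by simp
  finally show ?thesis .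
qed

lemma cip_scale_r: assumes "cinner_on sc S ip" "x \<in> S" "y \<in> S"
  shows "ip x (sc c y) = cnj c * ip x y"
proof -
  have s: "subspace S" using cip_sub[OF assms(1)] .
  have "ip x (sc c y) = cnj (ip (sc c y) x)" using cip_conj[OF assms(1) subspace_scale[OF s assms(3)] assms(2)] .
  also have "\<dots> = cnj c * cnj (ip y x)" using cip_scale_l[OF assms(1) assms(3,2)] by simp
  also have "\<dots> = cnj c * ip x y" using cip_conj[OF assms(1) assms(2) assms(3)] by simp
  finally show ?thesis .
qed

lemma cip_zero_l: assumes "cinner_on sc S ip" "y \<in> S" shows "ip 0 y = 0"
proof -
  have s: "0 \<in> S" using subspace_0[OF cip_sub[OF assms(1)]] .
  have "ip (0 + 0) y = ip 0 y + ip 0 y" using cip_add_l[OF assms(1) s s assms(2)] .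
  then show ?thesis by simp
qed

lemma cip_zero_r: assumes "cinner_on sc S ip" "y \<in> S" shows "ip y 0 = 0"
  using cip_conj[OF assms(1) subspace_0[OF cip_sub[OF assms(1)]] assms(2)] cip_zero_l[OF assms] by simp

lemma cip_diff_l: assumes "cinner_on sc S ip" "x \<in> S" "y \<in> S" "z \<in> S"
  shows "ip (x - y) z = ip x z - ip y z"
proof -
  have s: "x - y \<in> S" using subspace_diff[OF cip_sub[OF assms(1)] assms(2,3)] .
  have "ip ((x - y) + y) z = ip (x - y) z + ip y z" using cip_add_l[OF assms(1) s assms(3,4)] .
  then show ?thesis by simp
qed

lemma cip_diff_r: assumes "cinner_on sc S ip" "x \<in> S" "y \<in> S" "z \<in> S"
  shows "ip z (x - y) = ip z x - ip z y"
proof -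
  have s: "x - y \<in> S" using subspace_diff[OF cip_sub[OF assms(1)] assms(2,3)] .
  have "ip z ((x - y) + y) = ip z (x - y) + ip z y" using cip_add_r[OF assms(1) assms(4) s assms(3)] .
  then show ?thesis by simp
qed

lemma cip_real: assumes "cinner_on sc S ip" "x \<in> S" shows "ip x x = of_real (Re (ip x x))"
proof -
  have "ip x x = cnj (ip x x)" using cip_conj[OF assms assms(2)] .
  then have "Im (ip x x) = Im (cnj (ip x x))" by simp
  then have "Im (ip x x) = 0" by simp
  then show ?thesis by (simp add: complex_eq_iff)
qed

lemma ipn_nonneg: "cinner_on sc S ip \<Longrightarrow> x \<in> S \<Longrightarrow> 0 \<le> ipnorm ip x"
  unfolding ipnorm_def using cip_pos by simp

lemma ipn_sq: "cinner_on sc S ip \<Longrightarrow> x \<in> S \<Longrightarrow> (ipnorm ip x)\<^sup>2 = Re (ip x x)"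
  unfolding ipnorm_def using cip_pos by simp

lemma ipn_zero: assumes "cinner_on sc S ip" "x \<in> S" shows "ipnorm ip x = 0 \<longleftrightarrow> x = 0"
proof
  assume "ipnorm ip x = 0"
  then have "Re (ip x x) = 0" unfolding ipnorm_def by simp
  then have "ip x x = 0" using cip_real[OF assms] by simp
  then show "x = 0" using cip_def0[OF assms] by simp
next
  assume "x = 0" then show "ipnorm ip x = 0" unfolding ipnorm_def
    using cip_zero_l[OF assms(1) subspace_0[OF cip_sub[OF assms(1)]]] by simp
qed

lemma ipn_pos: assumes "cinner_on sc S ip" "x \<in> S" "x \<noteq> 0" shows "0 < ipnorm ip x"
  using ipn_zero[OF assms(1,2)] ipn_nonneg[OF assms(1,2)] assms(3) by linarith

lemma ipn_scale: assumes "cinner_on sc S ip" "x \<in> S"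
  shows "ipnorm ip (sc c x) = cmod c * ipnorm ip x"
proof -
  have s: "sc c x \<in> S" using subspace_scale[OF cip_sub[OF assms(1)] assms(2)] .
  have "ip (sc c x) (sc c x) = c * (cnj c * ip x x)"
    using cip_scale_l[OF assms(1) assms(2) s, where c=c] cip_scale_r[OF assms(1) assms(2) assms(2), where c=c] by simp
  also have "\<dots> = of_real ((cmod c)\<^sup>2) * ip x x"
    using complex_norm_square[of c] by (simp add: mult.assoc)
  finally have "Re (ip (sc c x) (sc c x)) = (cmod c)\<^sup>2 * Re (ip x x)" by simp
  then show ?thesis unfolding ipnorm_def by (simp add: real_sqrt_mult)
qed

end

context cvs begin
lemma cip_expand: assumes "cinner_on sc S ip" "x \<in> S" "y \<in> S"
  shows "Re (ip (x + sc c y) (x + sc c y)) = Re (ip x x) + 2 * Re (cnj c * ip x y) + (cmod c)\<^sup>2 * Re (ip y y)"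
proof -
  have s: "sc c y \<in> S" using subspace_scale[OF cip_sub[OF assms(1)] assms(3)] .
  have s2: "x + sc c y \<in> S" using subspace_add[OF cip_sub[OF assms(1)] assms(2) s] .
  have "ip (x + sc c y) (x + sc c y) = ip x (x + sc c y) + c * ip y (x + sc c y)"
    using cip_add_l[OF assms(1) assms(2) s s2] cip_scale_l[OF assms(1) assms(3) s2] by simp
  also have "\<dots> = ip x x + cnj c * ip x y + c * (ip y x + cnj c * ip y y)"
    using cip_add_r[OF assms(1) assms(2) assms(2) s] cip_add_r[OF assms(1) assms(3) assms(2) s]
      cip_scale_r[OF assms(1) assms(2) assms(3)] cip_scale_r[OF assms(1) assms(3) assms(3)] by simp
  also have "\<dots> = ip x x + cnj c * ip x y + c * cnj (ip x y) + (c * cnj c) * ip y y"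
    using cip_conj[OF assms(1) assms(2) assms(3)] by (simp add: distrib_left mult.assoc)
  also have "\<dots> = ip x x + cnj c * ip x y + cnj (cnj c * ip x y) + of_real ((cmod c)\<^sup>2) * ip y y"
    using complex_norm_square[of c] by simp
  finally show ?thesis by simp
qed

lemma cip_cs: assumes "cinner_on sc S ip" "x \<in> S" "y \<in> S"
  shows "cmod (ip x y) \<le> ipnorm ip x * ipnorm ip y"
proof -
  have "(cmod (ip x y))\<^sup>2 \<le> Re (ip x x) * Re (ip y y)"
    apply (rule cs_arith)
    using cip_expand[OF assms] cip_pos[OF assms(1)] assms subspace_add[OF cip_sub[OF assms(1)] assms(2) subspace_scale[OF cip_sub[OF assms(1)] assms(3)]]
    by metis+
  also have "\<dots> = (ipnorm ip x * ipnorm ip y)\<^sup>2"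
    using ipn_sq[OF assms(1,2)] ipn_sq[OF assms(1,3)] by (simp add: power_mult_distrib)
  finally show ?thesis
    using ipn_nonneg[OF assms(1,2)] ipn_nonneg[OF assms(1,3)] by (simp add: power2_le_iff_abs_le)
qed

lemma ipn_triangle: assumes "cinner_on sc S ip" "x \<in> S" "y \<in> S"
  shows "ipnorm ip (x + y) \<le> ipnorm ip x + ipnorm ip y"
proof -
  have e: "Re (ip (x + sc 1 y) (x + sc 1 y)) = Re (ip x x) + 2 * Re (ip x y) + Re (ip y y)"
    using cip_expand[OF assms, of 1] by simp
  have "Re (ip x y) \<le> cmod (ip x y)" by (rule complex_Re_le_cmod)
  also have "\<dots> \<le> ipnorm ip x * ipnorm ip y" by (rule cip_cs[OF assms])
  finally have "(ipnorm ip (x + y))\<^sup>2 \<le> (ipnorm ip x + ipnorm ip y)\<^sup>2"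
    using e ipn_sq[OF assms(1)] assms subspace_add[OF cip_sub[OF assms(1)] assms(2,3)]
    by (simp add: power2_sum)
  then show ?thesis
    using ipn_nonneg[OF assms(1,2)] ipn_nonneg[OF assms(1,3)] by (simp add: power2_le_iff_abs_le)
qed

lemma ipn_diff: assumes "cinner_on sc S ip" "x \<in> S" "y \<in> S"
  shows "ipnorm ip (x - y) \<le> ipnorm ip x + ipnorm ip y"
proof -
  have m: "sc (-1) y \<in> S" using subspace_scale[OF cip_sub[OF assms(1)] assms(3)] .
  have "x - y = x + sc (-1) y" by simp
  then show ?thesis using ipn_triangle[OF assms(1,2) m] ipn_scale[OF assms(1,3), of "-1"] by simp
qed

end

lemma opn_bdd: fixes nS :: "'a \<Rightarrow> real" and nT :: "'b \<Rightarrow> real"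
  assumes bnd: "\<forall>x\<in>S. nT (f x) \<le> K * nS x" and nn: "\<forall>x\<in>S. 0 \<le> nS x"
  shows "bdd_above {nT (f x) | x. x \<in> S \<and> nS x \<le> 1}"
proof (rule bdd_aboveI[where M = "max K 0"])
  fix t assume "t \<in> {nT (f x) | x. x \<in> S \<and> nS x \<le> 1}"
  then obtain x where x: "x \<in> S" "nS x \<le> 1" "t = nT (f x)" by blast
  have x0: "0 \<le> nS x" using nn x(1) by blast
  have "K * nS x \<le> max K 0 * nS x" by (rule mult_right_mono) (use x0 in auto)
  also have "\<dots> \<le> max K 0" using nn x by (simp add: mult_left_le)
  finally show "t \<le> max K 0" using bnd x by fastforce
qed

lemma opn_bound: fixes nS :: "'a \<Rightarrow> real" and nT :: "'b \<Rightarrow> real"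
  assumes bnd: "\<forall>x\<in>S. nT (f x) \<le> K * nS x" and nn: "\<forall>x\<in>S. 0 \<le> nS x"
  and scl: "\<forall>x\<in>S. 0 < nS x \<longrightarrow> (\<exists>y\<in>S. nS y \<le> 1 \<and> nT (f x) \<le> nT (f y) * nS x)"
  and x: "x \<in> S"
  shows "nT (f x) \<le> op_norm S nS nT f * nS x"
proof (cases "nS x = 0")
  case True
  then show ?thesis using bnd x by fastforce
next
  case False
  then have p: "0 < nS x" using nn x by force
  then obtain y where y: "y \<in> S" "nS y \<le> 1" "nT (f x) \<le> nT (f y) * nS x" using scl x by blast
  have "nT (f y) \<le> op_norm S nS nT f" unfolding op_norm_def
    by (rule cSup_upper) (use y opn_bdd[where S=S and nT=nT and f=f and K=K and nS=nS, OF bnd nn] in blast)+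
  then show ?thesis using y(3) p by (meson mult_right_mono order_trans less_imp_le)
qed

lemma opn_nonneg: fixes nS :: "'a \<Rightarrow> real" and nT :: "'b \<Rightarrow> real"
  assumes bnd: "\<forall>x\<in>S. nT (f x) \<le> K * nS x" and nn: "\<forall>x\<in>S. 0 \<le> nS x"
  and z: "z \<in> S" "nS z \<le> 1" "0 \<le> nT (f z)"
  shows "0 \<le> op_norm S nS nT f"
proof -
  have "nT (f z) \<le> op_norm S nS nT f" unfolding op_norm_def
    by (rule cSup_upper) (use z opn_bdd[where S=S and nT=nT and f=f and K=K and nS=nS, OF bnd nn] in blast)+
  then show ?thesis using z by simp
qed

definition sesq_on :: "(complex \<Rightarrow> 'a::ab_group_add \<Rightarrow> 'a) \<Rightarrow> 'a set \<Rightarrow> ('a \<Rightarrow> 'a \<Rightarrow> complex) \<Rightarrow> bool" where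
  "sesq_on sc S a \<longleftrightarrow>
     (\<forall>x\<in>S. \<forall>y\<in>S. \<forall>z\<in>S. a (x + y) z = a x z + a y z \<and> a z (x + y) = a z x + a z y) \<and>
     (\<forall>c. \<forall>x\<in>S. \<forall>y\<in>S. a (sc c x) y = c * a x y \<and> a x (sc c y) = cnj c * a x y)"

context cvs begin

lemma opn_lin: assumes S: "cinner_on sc S ipS" and T: "cinner_on sc UNIV ipT"
  and lin: "\<forall>c. \<forall>x\<in>S. f (sc c x) = sc c (f x)"
  and bnd: "\<forall>x\<in>S. ipnorm ipT (f x) \<le> K * ipnorm ipS x"
  shows "\<forall>x\<in>S. ipnorm ipT (f x) \<le> op_norm S (ipnorm ipS) (ipnorm ipT) f * ipnorm ipS x"
    and "0 \<le> op_norm S (ipnorm ipS) (ipnorm ipT) f"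
proof -
  have nn: "\<forall>x\<in>S. 0 \<le> ipnorm ipS x" using ipn_nonneg[OF S] by blast
  have scl: "\<forall>x\<in>S. 0 < ipnorm ipS x \<longrightarrow> (\<exists>y\<in>S. ipnorm ipS y \<le> 1 \<and> ipnorm ipT (f x) \<le> ipnorm ipT (f y) * ipnorm ipS x)"
  proof (intro ballI impI)
    fix x assume x: "x \<in> S" and p: "0 < ipnorm ipS x"
    define y where "y = sc (of_real (1 / ipnorm ipS x)) x"
    have y: "y \<in> S" unfolding y_def using subspace_scale[OF cip_sub[OF S] x] .
    have "ipnorm ipS y = 1" unfolding y_def using ipn_scale[OF S x] p by (simp add: norm_divide)
    moreover have "ipnorm ipT (f y) = ipnorm ipT (f x) / ipnorm ipS x"
      unfolding y_def using lin x ipn_scale[OF T, of "f x"] p by (simp add: norm_divide)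
    ultimately show "\<exists>y\<in>S. ipnorm ipS y \<le> 1 \<and> ipnorm ipT (f x) \<le> ipnorm ipT (f y) * ipnorm ipS x"
      using y p by (intro bexI[of _ y]) auto
  qed
  show "\<forall>x\<in>S. ipnorm ipT (f x) \<le> op_norm S (ipnorm ipS) (ipnorm ipT) f * ipnorm ipS x"
    using opn_bound[where S=S and nS="ipnorm ipS" and nT="ipnorm ipT" and f=f and K=K, OF bnd nn scl] by blast
  have z: "0 \<in> S" using subspace_0[OF cip_sub[OF S]] .
  show "0 \<le> op_norm S (ipnorm ipS) (ipnorm ipT) f"
    by (rule opn_nonneg[where S=S and nS="ipnorm ipS" and nT="ipnorm ipT" and f=f and K=K, OF bnd nn z]) (use ipn_zero[OF S z] ipn_nonneg[OF T] in auto)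
qed

lemma dual_bound: assumes S: "cinner_on sc S ipS" and f: "dual_elem sc S (ipnorm ipS) f"
  shows "\<forall>x\<in>S. cmod (f x) \<le> dual_norm S (ipnorm ipS) f * ipnorm ipS x"
    and "0 \<le> dual_norm S (ipnorm ipS) f"
proof -
  have dn: "dual_norm S (ipnorm ipS) f = op_norm S (ipnorm ipS) cmod f"
    unfolding dual_norm_def op_norm_def ..
  obtain K where bnd: "\<forall>x\<in>S. cmod (f x) \<le> K * ipnorm ipS x" using f unfolding dual_elem_def by blast
  have lin: "\<forall>c. \<forall>x\<in>S. f (sc c x) = cnj c * f x" using f unfolding dual_elem_def by blast
  have nn: "\<forall>x\<in>S. 0 \<le> ipnorm ipS x" using ipn_nonneg[OF S] by blast
  have scl: "\<forall>x\<in>S. 0 < ipnorm ipS x \<longrightarrow> (\<exists>y\<in>S. ipnorm ipS y \<le> 1 \<and> cmod (f x) \<le> cmod (f y) * ipnorm ipS x)"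
  proof (intro ballI impI)
    fix x assume x: "x \<in> S" and p: "0 < ipnorm ipS x"
    define y where "y = sc (of_real (1 / ipnorm ipS x)) x"
    have y: "y \<in> S" unfolding y_def using subspace_scale[OF cip_sub[OF S] x] .
    have "ipnorm ipS y = 1" unfolding y_def using ipn_scale[OF S x] p by (simp add: norm_divide)
    moreover have "cmod (f y) = cmod (f x) / ipnorm ipS x"
      unfolding y_def using lin x p by (simp add: norm_mult norm_divide)
    ultimately show "\<exists>y\<in>S. ipnorm ipS y \<le> 1 \<and> cmod (f x) \<le> cmod (f y) * ipnorm ipS x"
      using y p by (intro bexI[of _ y]) auto
  qed
  show "\<forall>x\<in>S. cmod (f x) \<le> dual_norm S (ipnorm ipS) f * ipnorm ipS x"
    unfolding dn using opn_bound[where S=S and nS="ipnorm ipS" and nT=cmod and f=f and K=K, OF bnd nn scl] by blast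
  have z: "0 \<in> S" using subspace_0[OF cip_sub[OF S]] .
  show "0 \<le> dual_norm S (ipnorm ipS) f" unfolding dn
    by (rule opn_nonneg[where S=S and nS="ipnorm ipS" and nT=cmod and f=f and K=K, OF bnd nn z]) (use ipn_zero[OF S z] in auto)
qed

end

lemma sesq_add_l: "sesq_on sc S a \<Longrightarrow> x\<in>S \<Longrightarrow> y\<in>S \<Longrightarrow> z\<in>S \<Longrightarrow> a (x + y) z = a x z + a y z"
  unfolding sesq_on_def by simp
lemma sesq_add_r: "sesq_on sc S a \<Longrightarrow> x\<in>S \<Longrightarrow> y\<in>S \<Longrightarrow> z\<in>S \<Longrightarrow> a z (x + y) = a z x + a z y"
  unfolding sesq_on_def by simp
lemma sesq_scale_l: "sesq_on sc S a \<Longrightarrow> x\<in>S \<Longrightarrow> y\<in>S \<Longrightarrow> a (sc c x) y = c * a x y"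
  unfolding sesq_on_def by simp
lemma sesq_scale_r: "sesq_on sc S a \<Longrightarrow> x\<in>S \<Longrightarrow> y\<in>S \<Longrightarrow> a x (sc c y) = cnj c * a x y"
  unfolding sesq_on_def by simp

context cvs begin

lemma sesq_zero_l: assumes "sesq_on sc S a" "subspace S" "y \<in> S" shows "a 0 y = 0"
proof -
  have z: "0 \<in> S" using subspace_0[OF assms(2)] .
  have "a (0 + 0) y = a 0 y + a 0 y" using sesq_add_l[OF assms(1) z z assms(3)] .
  then show ?thesis by simp
qed

lemma sesq_zero_r: assumes "sesq_on sc S a" "subspace S" "y \<in> S" shows "a y 0 = 0"
proof -
  have z: "0 \<in> S" using subspace_0[OF assms(2)] .
  have "a y (0 + 0) = a y 0 + a y 0" using sesq_add_r[OF assms(1) z z assms(3)] .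
  then show ?thesis by simp
qed

lemma sesq_sum_l: assumes a: "sesq_on sc S a" and s: "subspace S" and "finite I"
  and x: "\<forall>i\<in>I. x i \<in> S" and y: "y \<in> S"
  shows "a (\<Sum>i\<in>I. x i) y = (\<Sum>i\<in>I. a (x i) y)"
  using assms(3) x
proof (induction I rule: finite_induct)
  case empty then show ?case using sesq_zero_l[OF a s y] by simp
next
  case (insert i I)
  have m: "(\<Sum>i\<in>I. x i) \<in> S" by (rule subspace_sum[OF s]) (use insert in auto)
  have "a (x i + (\<Sum>i\<in>I. x i)) y = a (x i) y + a (\<Sum>i\<in>I. x i) y"
    by (rule sesq_add_l[OF a _ m y]) (use insert in auto)
  then show ?case using insert by simp
qed

lemma sesq_sum_r: assumes a: "sesq_on sc S a" and s: "subspace S" and "finite I"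
  and x: "\<forall>i\<in>I. x i \<in> S" and y: "y \<in> S"
  shows "a y (\<Sum>i\<in>I. x i) = (\<Sum>i\<in>I. a y (x i))"
  using assms(3) x
proof (induction I rule: finite_induct)
  case empty then show ?case using sesq_zero_r[OF a s y] by simp
next
  case (insert i I)
  have m: "(\<Sum>i\<in>I. x i) \<in> S" by (rule subspace_sum[OF s]) (use insert in auto)
  have "a y (x i + (\<Sum>i\<in>I. x i)) = a y (x i) + a y (\<Sum>i\<in>I. x i)"
    by (rule sesq_add_r[OF a _ m y]) (use insert in auto)
  then show ?case using insert by simp
qed

end

context cvs begin

lemma combo_in: assumes s: "subspace S" and ph: "\<forall>j<N. ph j \<in> S" and V: "V \<in> carrier_vec N"
  shows "combo sc ph V \<in> S"
  unfolding combo_def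
proof (rule subspace_sum[OF s])
  fix j assume "j \<in> {..<dim_vec V}"
  then have "ph j \<in> S" using V ph by auto
  then show "sc (V $ j) (ph j) \<in> S" by (rule subspace_scale[OF s])
qed

lemma combo_add: assumes "V \<in> carrier_vec N" "W \<in> carrier_vec N"
  shows "combo sc ph (V + W) = combo sc ph V + combo sc ph W"
  unfolding combo_def using assms by (simp add: scale_left_distrib sum.distrib)

lemma combo_smult: assumes "V \<in> carrier_vec N"
  shows "combo sc ph (c \<cdot>\<^sub>v V) = sc c (combo sc ph V)"
  unfolding combo_def using assms by (simp add: scale_sum_right)

lemma combo_diff: assumes "V \<in> carrier_vec N" "W \<in> carrier_vec N"
  shows "combo sc ph (V - W) = combo sc ph V - combo sc ph W"
  unfolding combo_def using assms by (simp add: scale_left_diff_distrib sum_subtractf)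

lemma combo_zero: "combo sc ph (0\<^sub>v N) = 0"
  unfolding combo_def by simp

end

context cvs begin

lemma sesq_combo: assumes a: "sesq_on sc S a" and s: "subspace S" and ph: "\<forall>j<N. ph j \<in> S"
  and V: "V \<in> carrier_vec N" and W: "W \<in> carrier_vec N"
  shows "ip2 (galerkin_mat a ph N *\<^sub>v V) W = a (combo sc ph V) (combo sc ph W)"
proof -
  have cW: "combo sc ph W \<in> S" using combo_in[OF s ph W] .
  have phs: "\<And>j c. j < N \<Longrightarrow> sc c (ph j) \<in> S" using ph subspace_scale[OF s] by simp
  have dV: "dim_vec V = N" "dim_vec W = N" using V W by auto
  have "a (combo sc ph V) (combo sc ph W) = (\<Sum>j<N. a (sc (V $ j) (ph j)) (combo sc ph W))"
    unfolding combo_def[of sc ph V] dV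
    by (rule sesq_sum_l[OF a s finite_lessThan _ cW]) (use phs in auto)
  also have "\<dots> = (\<Sum>j<N. V $ j * a (ph j) (combo sc ph W))"
    by (rule sum.cong) (use sesq_scale_l[OF a] ph cW in auto)
  also have "\<dots> = (\<Sum>j<N. V $ j * (\<Sum>i<N. a (ph j) (sc (W $ i) (ph i))))"
  proof (rule sum.cong)
    fix j assume j: "j \<in> {..<N}"
    show "V $ j * a (ph j) (combo sc ph W) = V $ j * (\<Sum>i<N. a (ph j) (sc (W $ i) (ph i)))"
      unfolding combo_def[of sc ph W] dV
      using sesq_sum_r[OF a s finite_lessThan, where x="\<lambda>i. sc (W $ i) (ph i)" and y="ph j"] j ph phs by auto
  qed simp
  also have "\<dots> = (\<Sum>j<N. V $ j * (\<Sum>i<N. cnj (W $ i) * a (ph j) (ph i)))"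
  proof (rule sum.cong)
    fix j assume j: "j \<in> {..<N}"
    have "(\<Sum>i<N. a (ph j) (sc (W $ i) (ph i))) = (\<Sum>i<N. cnj (W $ i) * a (ph j) (ph i))"
      by (rule sum.cong) (use sesq_scale_r[OF a] ph j in auto)
    then show "V $ j * (\<Sum>i<N. a (ph j) (sc (W $ i) (ph i))) = V $ j * (\<Sum>i<N. cnj (W $ i) * a (ph j) (ph i))"
      by simp
  qed simp
  also have "\<dots> = (\<Sum>j<N. \<Sum>i<N. a (ph j) (ph i) * V $ j * cnj (W $ i))"
    by (simp add: sum_distrib_left mult_ac)
  also have "\<dots> = (\<Sum>i<N. \<Sum>j<N. a (ph j) (ph i) * V $ j * cnj (W $ i))"
    by (rule sum.swap)
  also have "\<dots> = (\<Sum>i<N. (\<Sum>j<N. a (ph j) (ph i) * V $ j) * cnj (W $ i))"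
    by (simp add: sum_distrib_right)
  also have "\<dots> = ip2 (galerkin_mat a ph N *\<^sub>v V) W"
    unfolding ip2_def galerkin_mat_def mult_mat_vec_def scalar_prod_def using dV
    by (auto simp: atLeast0LessThan intro!: sum.cong)
  finally show ?thesis by simp
qed

end

lemma ip2_add_l: "V \<in> carrier_vec n \<Longrightarrow> W \<in> carrier_vec n \<Longrightarrow> Z \<in> carrier_vec n \<Longrightarrow>
  ip2 (V + W) Z = ip2 V Z + ip2 W Z"
  unfolding ip2_def by (auto simp: sum.distrib[symmetric] distrib_right intro!: sum.cong)
lemma ip2_diff_l: "V \<in> carrier_vec n \<Longrightarrow> W \<in> carrier_vec n \<Longrightarrow> Z \<in> carrier_vec n \<Longrightarrow>
  ip2 (V - W) Z = ip2 V Z - ip2 W Z"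
  unfolding ip2_def by (auto simp: sum_subtractf[symmetric] left_diff_distrib intro!: sum.cong)
lemma ip2_smult_l: "V \<in> carrier_vec n \<Longrightarrow> ip2 (c \<cdot>\<^sub>v V) Z = c * ip2 V Z"
  unfolding ip2_def by (auto simp: sum_distrib_left mult.assoc intro!: sum.cong)
lemma ip2_add_r: "V \<in> carrier_vec n \<Longrightarrow> W \<in> carrier_vec n \<Longrightarrow> Z \<in> carrier_vec n \<Longrightarrow>
  ip2 Z (V + W) = ip2 Z V + ip2 Z W"
  unfolding ip2_def by (auto simp: sum.distrib[symmetric] distrib_left intro!: sum.cong)
lemma ip2_smult_r: "V \<in> carrier_vec n \<Longrightarrow> Z \<in> carrier_vec n \<Longrightarrow> ip2 Z (c \<cdot>\<^sub>v V) = cnj c * ip2 Z V"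
  unfolding ip2_def by (auto simp: sum_distrib_left mult_ac intro!: sum.cong)
lemma ip2_conj: "V \<in> carrier_vec n \<Longrightarrow> W \<in> carrier_vec n \<Longrightarrow> ip2 W V = cnj (ip2 V W)"
  unfolding ip2_def by (auto simp: mult.commute intro!: sum.cong)
lemma ip2_zero_l: "ip2 (0\<^sub>v n) W = 0"
  unfolding ip2_def by simp
lemma ip2_self: "Re (ip2 V V) = (\<Sum>i<dim_vec V. (Re (V $ i))\<^sup>2 + (Im (V $ i))\<^sup>2)"
  unfolding ip2_def by (simp add: cmod_power2 power2_eq_square)
lemma ip2_self_nonneg: "0 \<le> Re (ip2 V V)"
  unfolding ip2_self by (intro sum_nonneg) simp

definition herm :: "nat \<Rightarrow> complex mat \<Rightarrow> bool" where
  "herm n M \<longleftrightarrow> M \<in> carrier_mat n n \<and> (\<forall>i<n. \<forall>j<n. M $$ (i, j) = cnj (M $$ (j, i)))"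

lemma mv_index: assumes "M \<in> carrier_mat n n" "V \<in> carrier_vec n" "i < n"
  shows "(M *\<^sub>v V) $ i = (\<Sum>j<n. M $$ (i, j) * V $ j)"
proof -
  have "(M *\<^sub>v V) $ i = row M i \<bullet> V" using assms by simp
  also have "\<dots> = (\<Sum>j\<in>{0..<n}. row M i $ j * V $ j)" unfolding scalar_prod_def using assms by simp
  also have "\<dots> = (\<Sum>j<n. M $$ (i, j) * V $ j)"
    by (rule sum.cong) (use assms in auto)
  finally show ?thesis .
qed

lemma ip2_mv: assumes M: "M \<in> carrier_mat n n" and V: "V \<in> carrier_vec n"
  shows "ip2 (M *\<^sub>v V) W = (\<Sum>i<n. \<Sum>j<n. M $$ (i, j) * V $ j * cnj (W $ i))"
proof -
  have "ip2 (M *\<^sub>v V) W = (\<Sum>i<n. (M *\<^sub>v V) $ i * cnj (W $ i))" unfolding ip2_def using M by simp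
  also have "\<dots> = (\<Sum>i<n. (\<Sum>j<n. M $$ (i, j) * V $ j) * cnj (W $ i))"
    by (rule sum.cong) (use mv_index[OF M V] in auto)
  also have "\<dots> = (\<Sum>i<n. \<Sum>j<n. M $$ (i, j) * V $ j * cnj (W $ i))"
    by (simp add: sum_distrib_right)
  finally show ?thesis .
qed

lemma herm_ip2: assumes h: "herm n M" and V: "V \<in> carrier_vec n" and W: "W \<in> carrier_vec n"
  shows "ip2 (M *\<^sub>v V) W = cnj (ip2 (M *\<^sub>v W) V)"
proof -
  have M: "M \<in> carrier_mat n n" using h unfolding herm_def by (rule conjunct1)
  have e: "\<forall>i<n. \<forall>j<n. M $$ (i, j) = cnj (M $$ (j, i))" using h unfolding herm_def by (rule conjunct2)
  have "ip2 (M *\<^sub>v V) W = (\<Sum>i<n. \<Sum>j<n. M $$ (i, j) * V $ j * cnj (W $ i))"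
    by (rule ip2_mv[OF M V])
  also have "\<dots> = (\<Sum>j<n. \<Sum>i<n. M $$ (i, j) * V $ j * cnj (W $ i))"
    by (rule sum.swap)
  also have "\<dots> = (\<Sum>j<n. \<Sum>i<n. cnj (M $$ (j, i) * W $ i * cnj (V $ j)))"
  proof (intro sum.cong refl)
    fix i j assume j: "j \<in> {..<n}" and i: "i \<in> {..<n}"
    have eq: "M $$ (i, j) = cnj (M $$ (j, i))" using e i j by blast
    show "M $$ (i, j) * V $ j * cnj (W $ i) = cnj (M $$ (j, i) * W $ i * cnj (V $ j))"
      unfolding eq by (simp add: mult_ac)
  qed
  also have "\<dots> = cnj (\<Sum>j<n. \<Sum>i<n. M $$ (j, i) * W $ i * cnj (V $ j))"
    by (simp only: cnj_sum)
  also have "\<dots> = cnj (ip2 (M *\<^sub>v W) V)"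
    using ip2_mv[OF M W, of V] by simp
  finally show ?thesis .
qed

lemma formM_expand: assumes h: "herm n M" and Z: "Z \<in> carrier_vec n" and V: "V \<in> carrier_vec n"
  shows "Re (ip2 (M *\<^sub>v (Z + c \<cdot>\<^sub>v V)) (Z + c \<cdot>\<^sub>v V)) =
    Re (ip2 (M *\<^sub>v Z) Z) + 2 * Re (cnj c * ip2 (M *\<^sub>v Z) V) + (cmod c)\<^sup>2 * Re (ip2 (M *\<^sub>v V) V)"
proof -
  have M: "M \<in> carrier_mat n n" using h unfolding herm_def by (rule conjunct1)
  have cV: "c \<cdot>\<^sub>v V \<in> carrier_vec n" using V by simp
  have MZ: "M *\<^sub>v Z \<in> carrier_vec n" and MV: "M *\<^sub>v V \<in> carrier_vec n" using M Z V by auto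
  have "M *\<^sub>v (Z + c \<cdot>\<^sub>v V) = M *\<^sub>v Z + c \<cdot>\<^sub>v (M *\<^sub>v V)"
    using mult_add_distrib_mat_vec[OF M Z cV] mult_mat_vec[OF M V] by simp
  then have "ip2 (M *\<^sub>v (Z + c \<cdot>\<^sub>v V)) (Z + c \<cdot>\<^sub>v V)
     = ip2 (M *\<^sub>v Z) (Z + c \<cdot>\<^sub>v V) + c * ip2 (M *\<^sub>v V) (Z + c \<cdot>\<^sub>v V)"
    using ip2_add_l[OF MZ _ , of "c \<cdot>\<^sub>v (M *\<^sub>v V)" "Z + c \<cdot>\<^sub>v V"] ip2_smult_l[OF MV] MV Z V by simp
  also have "\<dots> = ip2 (M *\<^sub>v Z) Z + cnj c * ip2 (M *\<^sub>v Z) V + c * (ip2 (M *\<^sub>v V) Z + cnj c * ip2 (M *\<^sub>v V) V)"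
    using ip2_add_r[OF Z cV MZ] ip2_add_r[OF Z cV MV] ip2_smult_r[OF V MZ] ip2_smult_r[OF V MV] by simp
  also have "\<dots> = ip2 (M *\<^sub>v Z) Z + cnj c * ip2 (M *\<^sub>v Z) V + c * cnj (ip2 (M *\<^sub>v Z) V) + (c * cnj c) * ip2 (M *\<^sub>v V) V"
    using herm_ip2[OF h V Z] by (simp add: distrib_left mult.assoc)
  also have "\<dots> = ip2 (M *\<^sub>v Z) Z + cnj c * ip2 (M *\<^sub>v Z) V + cnj (cnj c * ip2 (M *\<^sub>v Z) V) + of_real ((cmod c)\<^sup>2) * ip2 (M *\<^sub>v V) V"
    using complex_norm_square[of c] by simp
  finally show ?thesis by simp
qed

lemma formM_cs: assumes h: "herm n M" and psd: "\<forall>V\<in>carrier_vec n. 0 \<le> Re (ip2 (M *\<^sub>v V) V)"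
  and Z: "Z \<in> carrier_vec n" and V: "V \<in> carrier_vec n"
  shows "cmod (ip2 (M *\<^sub>v Z) V) \<le> wnorm M Z * wnorm M V"
proof -
  have "(cmod (ip2 (M *\<^sub>v Z) V))\<^sup>2 \<le> Re (ip2 (M *\<^sub>v Z) Z) * Re (ip2 (M *\<^sub>v V) V)"
  proof (rule cs_arith)
    fix c
    have "Z + c \<cdot>\<^sub>v V \<in> carrier_vec n" using Z V by simp
    then show "0 \<le> Re (ip2 (M *\<^sub>v Z) Z) + 2 * Re (cnj c * ip2 (M *\<^sub>v Z) V) + (cmod c)\<^sup>2 * Re (ip2 (M *\<^sub>v V) V)"
      using psd formM_expand[OF h Z V, of c] by metis
  qed (use psd V in auto)
  also have "\<dots> = (wnorm M Z * wnorm M V)\<^sup>2"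
    unfolding wnorm_def using psd Z V by (simp add: power_mult_distrib)
  finally show ?thesis unfolding wnorm_def
    using psd Z V by (simp add: power2_le_iff_abs_le)
qed

lemma inv_exists: assumes A: "(A :: complex mat) \<in> carrier_mat n n"
  and inj: "\<forall>X\<in>carrier_vec n. A *\<^sub>v X = 0\<^sub>v n \<longrightarrow> X = 0\<^sub>v n"
  shows "\<exists>B. B \<in> carrier_mat n n \<and> A * B = 1\<^sub>m n \<and> B * A = 1\<^sub>m n"
proof -
  have "det A \<noteq> 0" using det_0_iff_vec_prod_zero[OF A] inj by blast
  then have "A \<in> Units (ring_mat TYPE(complex) n ())" by (rule det_non_zero_imp_unit[OF A])
  then show ?thesis unfolding Units_def ring_mat_simps by auto
qed

lemma mat_inv_props: assumes A: "(A :: complex mat) \<in> carrier_mat n n"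
  and inj: "\<forall>X\<in>carrier_vec n. A *\<^sub>v X = 0\<^sub>v n \<longrightarrow> X = 0\<^sub>v n"
  shows "mat_inv n A \<in> carrier_mat n n" "A * mat_inv n A = 1\<^sub>m n" "mat_inv n A * A = 1\<^sub>m n"
    "invertible_mat A"
proof -
  have ex: "\<exists>B. B \<in> carrier_mat n n \<and> A * B = 1\<^sub>m n \<and> B * A = 1\<^sub>m n" by (rule inv_exists[OF A inj])
  have P: "mat_inv n A \<in> carrier_mat n n \<and> A * mat_inv n A = 1\<^sub>m n \<and> mat_inv n A * A = 1\<^sub>m n"
    unfolding mat_inv_def by (rule someI_ex[OF ex])
  then show "mat_inv n A \<in> carrier_mat n n" "A * mat_inv n A = 1\<^sub>m n" "mat_inv n A * A = 1\<^sub>m n" by auto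
  show "invertible_mat A" unfolding invertible_mat_def inverts_mat_def
    using P A by (intro conjI exI[of _ "mat_inv n A"]) auto
qed

lemma wnorm_zero: assumes "M \<in> carrier_mat n n" shows "wnorm M (0\<^sub>v n) = 0"
  unfolding wnorm_def ip2_def using assms by (auto intro!: sum.neutral)

lemma induced_le: assumes M: "M \<in> carrier_mat n n" and "\<forall>V\<in>carrier_vec n. wnorm M V \<le> 1 \<longrightarrow> wnorm M (A *\<^sub>v V) \<le> B"
  shows "induced_norm n M A \<le> B"
  unfolding induced_norm_def
proof (rule cSup_least)
  show "{wnorm M (A *\<^sub>v V) |V. V \<in> carrier_vec n \<and> wnorm M V \<le> 1} \<noteq> {}"
  proof -
    have "wnorm M (A *\<^sub>v 0\<^sub>v n) \<in> {wnorm M (A *\<^sub>v V) |V. V \<in> carrier_vec n \<and> wnorm M V \<le> 1}"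
      using wnorm_zero[OF M] by (intro CollectI exI[of _ "0\<^sub>v n"]) auto
    then show ?thesis by blast
  qed
qed (use assms in auto)

lemma norm2_wnorm: "V \<in> carrier_vec n \<Longrightarrow> wnorm (1\<^sub>m n) V = norm2 V"
  unfolding wnorm_def norm2_def by simp

lemma induced2_le: assumes "\<forall>V\<in>carrier_vec n. norm2 V \<le> 1 \<longrightarrow> norm2 (A *\<^sub>v V) \<le> B"
  shows "induced_norm2 n A \<le> B"
  unfolding induced_norm2_def
proof (rule cSup_least)
  have n0: "norm2 (0\<^sub>v n) = 0" unfolding norm2_def ip2_def by simp
  show "{norm2 (A *\<^sub>v V) |V. V \<in> carrier_vec n \<and> norm2 V \<le> 1} \<noteq> {}"
  proof -
    have "norm2 (A *\<^sub>v 0\<^sub>v n) \<in> {norm2 (A *\<^sub>v V) |V. V \<in> carrier_vec n \<and> norm2 V \<le> 1}"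
      using n0 by (intro CollectI exI[of _ "0\<^sub>v n"]) auto
    then show ?thesis by blast
  qed
qed (use assms in auto)

lemma herm_one: "herm n (1\<^sub>m n)"
  unfolding herm_def by simp

lemma eucl_cs: assumes "Z \<in> carrier_vec n" "V \<in> carrier_vec n"
  shows "cmod (ip2 Z V) \<le> norm2 Z * norm2 V"
proof -
  have "cmod (ip2 (1\<^sub>m n *\<^sub>v Z) V) \<le> wnorm (1\<^sub>m n) Z * wnorm (1\<^sub>m n) V"
    by (rule formM_cs[OF herm_one]) (use assms ip2_self_nonneg in auto)
  then show ?thesis using assms norm2_wnorm by simp
qed

locale disc = cvs sc for sc :: "complex \<Rightarrow> 'a::ab_group_add \<Rightarrow> 'a" +
  fixes ip0 ipH :: "'a \<Rightarrow> 'a \<Rightarrow> complex" and H :: "'a set" and a1 a2 :: "'a \<Rightarrow> 'a \<Rightarrow> complex"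
    and ph :: "nat \<Rightarrow> 'a" and N :: nat and DD :: "complex mat" and g d :: real
  assumes ip0: "cinner_on sc UNIV ip0" and ipH: "cinner_on sc H ipH"
    and nle: "\<forall>v\<in>H. ipnorm ip0 v \<le> ipnorm ipH v"
    and a1: "sesq_on sc H a1" and a2: "sesq_on sc H a2"
    and dbound: "\<forall>u\<in>H. \<forall>v\<in>H. cmod (a1 u v - a2 u v) \<le> d * ipnorm ipH u * ipnorm ipH v"
    and ph: "\<forall>j<N. ph j \<in> H" and indep: "\<forall>V\<in>carrier_vec N. combo sc ph V = 0 \<longrightarrow> V = 0\<^sub>v N"
    and DDh: "herm N DD" and DDn: "\<forall>V\<in>carrier_vec N. ipnorm ipH (combo sc ph V) = wnorm DD V"
    and infs: "\<forall>u\<in>galerkin_space sc ph N - {0}. \<forall>e>0. \<exists>v\<in>galerkin_space sc ph N - {0}.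
        (g - e) * ipnorm ipH u * ipnorm ipH v < cmod (a1 u v)"
    and gpos: "0 < g" and d0: "0 \<le> d" and dg: "d \<le> g / 2"
begin

abbreviation "nH \<equiv> ipnorm ipH"
abbreviation "n0 \<equiv> ipnorm ip0"
abbreviation "uu V \<equiv> combo sc ph V"
abbreviation "A1 \<equiv> galerkin_mat a1 ph N"
abbreviation "A2 \<equiv> galerkin_mat a2 ph N"

lemma sH: "subspace H" using cip_sub[OF ipH] .
lemma uin: "V \<in> carrier_vec N \<Longrightarrow> uu V \<in> H" using combo_in[OF sH ph] .
lemma nH_nn: "V \<in> carrier_vec N \<Longrightarrow> 0 \<le> nH (uu V)" using ipn_nonneg[OF ipH uin] .
lemma A1c: "A1 \<in> carrier_mat N N" unfolding galerkin_mat_def by simp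
lemma A2c: "A2 \<in> carrier_mat N N" unfolding galerkin_mat_def by simp
lemma ipA1: "V \<in> carrier_vec N \<Longrightarrow> W \<in> carrier_vec N \<Longrightarrow> ip2 (A1 *\<^sub>v V) W = a1 (uu V) (uu W)"
  using sesq_combo[OF a1 sH ph] .
lemma ipA2: "V \<in> carrier_vec N \<Longrightarrow> W \<in> carrier_vec N \<Longrightarrow> ip2 (A2 *\<^sub>v V) W = a2 (uu V) (uu W)"
  using sesq_combo[OF a2 sH ph] .
lemma DDc: "DD \<in> carrier_mat N N" using DDh unfolding herm_def by (rule conjunct1)

lemma DDpsd: "\<forall>V\<in>carrier_vec N. 0 \<le> Re (ip2 (DD *\<^sub>v V) V)"
proof
  fix V :: "complex vec" assume V: "V \<in> carrier_vec N"
  have "0 \<le> wnorm DD V" using DDn V nH_nn by metis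
  then show "0 \<le> Re (ip2 (DD *\<^sub>v V) V)" unfolding wnorm_def by simp
qed

lemma key: assumes X: "X \<in> carrier_vec N" and c: "0 \<le> c"
  and b: "\<forall>W\<in>carrier_vec N. cmod (a2 (uu X) (uu W)) \<le> c * nH (uu W)"
  shows "nH (uu X) \<le> 2 * c / g"
proof (cases "uu X = 0")
  case True
  then have "nH (uu X) = 0" using ipn_zero[OF ipH uin[OF X]] by simp
  then show ?thesis using c gpos by simp
next
  case False
  have p: "0 < nH (uu X)" using ipn_pos[OF ipH uin[OF X] False] .
  have inG: "uu X \<in> galerkin_space sc ph N - {0}" unfolding galerkin_space_def using X False by blast
  have main: "(g - d) * nH (uu X) \<le> c"
  proof (rule field_le_epsilon)
    fix e :: real assume e: "0 < e"
    define e' where "e' = e / nH (uu X)"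
    have e': "0 < e'" unfolding e'_def using e p by simp
    obtain v where v: "v \<in> galerkin_space sc ph N - {0}"
      and lt: "(g - e') * nH (uu X) * nH v < cmod (a1 (uu X) v)"
      using infs inG e' by blast
    obtain W where W: "W \<in> carrier_vec N" and vW: "v = uu W" using v unfolding galerkin_space_def by blast
    have vH: "v \<in> H" using uin[OF W] vW by simp
    have pv: "0 < nH v" using ipn_pos[OF ipH vH] v by simp
    have "cmod (a1 (uu X) v) \<le> cmod (a2 (uu X) v) + cmod (a1 (uu X) v - a2 (uu X) v)"
      by (metis add.commute diff_add_cancel norm_triangle_ineq)
    also have "\<dots> \<le> c * nH v + d * nH (uu X) * nH v"
      using b W vW dbound uin[OF X] vH by (intro add_mono) auto
    finally have "(g - e') * nH (uu X) * nH v < (c + d * nH (uu X)) * nH v"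
      using lt by (simp add: algebra_simps)
    then have "(g - e') * nH (uu X) < c + d * nH (uu X)"
      using pv by (simp add: mult_less_cancel_right)
    moreover have "e' * nH (uu X) = e" unfolding e'_def using p by simp
    ultimately show "(g - d) * nH (uu X) \<le> c + e" by (simp add: algebra_simps)
  qed
  have "g / 2 * nH (uu X) \<le> (g - d) * nH (uu X)"
    using dg p by (intro mult_right_mono) auto
  then have "g / 2 * nH (uu X) \<le> c" using main by simp
  then show ?thesis using gpos by (simp add: field_simps)
qed

lemma A2inj: "\<forall>X\<in>carrier_vec N. A2 *\<^sub>v X = 0\<^sub>v N \<longrightarrow> X = 0\<^sub>v N"
proof (intro ballI impI)
  fix X :: "complex vec" assume X: "X \<in> carrier_vec N" and z: "A2 *\<^sub>v X = 0\<^sub>v N"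
  have "\<forall>W\<in>carrier_vec N. cmod (a2 (uu X) (uu W)) \<le> 0 * nH (uu W)"
    using ipA2[OF X] z ip2_zero_l by simp
  then have "nH (uu X) \<le> 0" using key[OF X, of 0] by simp
  then have "uu X = 0" using ipn_zero[OF ipH uin[OF X]] nH_nn[OF X] by simp
  then show "X = 0\<^sub>v N" using indep X by blast
qed

lemma DDinj: "\<forall>X\<in>carrier_vec N. DD *\<^sub>v X = 0\<^sub>v N \<longrightarrow> X = 0\<^sub>v N"
proof (intro ballI impI)
  fix X :: "complex vec" assume X: "X \<in> carrier_vec N" and z: "DD *\<^sub>v X = 0\<^sub>v N"
  have "wnorm DD X = 0" unfolding wnorm_def z ip2_zero_l by simp
  then have "uu X = 0" using ipn_zero[OF ipH uin[OF X]] DDn X by simp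
  then show "X = 0\<^sub>v N" using indep X by blast
qed

end

context disc begin

abbreviation "A2i \<equiv> mat_inv N A2"
abbreviation "DDi \<equiv> mat_inv N DD"

lemma A2i: "A2i \<in> carrier_mat N N" "A2 * A2i = 1\<^sub>m N" "A2i * A2 = 1\<^sub>m N" "invertible_mat A2"
  using mat_inv_props[OF A2c A2inj] by auto
lemma DDi: "DDi \<in> carrier_mat N N" "DD * DDi = 1\<^sub>m N" "DDi * DD = 1\<^sub>m N"
  using mat_inv_props[OF DDc DDinj] by auto

lemma DDi_Re: assumes Y: "Y \<in> carrier_vec N"
  shows "Re (ip2 (DD *\<^sub>v (DDi *\<^sub>v Y)) (DDi *\<^sub>v Y)) = Re (ip2 (DDi *\<^sub>v Y) Y)"
proof -
  have Z: "DDi *\<^sub>v Y \<in> carrier_vec N" using DDi(1) Y by simp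
  have "DD *\<^sub>v (DDi *\<^sub>v Y) = Y"
    using assoc_mult_mat_vec[OF DDc DDi(1) Y] DDi(2) Y by simp
  then have "ip2 (DD *\<^sub>v (DDi *\<^sub>v Y)) (DDi *\<^sub>v Y) = cnj (ip2 (DDi *\<^sub>v Y) Y)"
    using ip2_conj[OF Y Z] by simp
  then show ?thesis by simp
qed

lemma wDi: "Y \<in> carrier_vec N \<Longrightarrow> wnorm DD (DDi *\<^sub>v Y) = wnorm DDi Y"
  unfolding wnorm_def using DDi_Re by simp

lemma dual_cs: assumes W: "W \<in> carrier_vec N" and V: "V \<in> carrier_vec N"
  shows "cmod (ip2 W V) \<le> wnorm DDi W * wnorm DD V"
proof -
  have Z: "DDi *\<^sub>v W \<in> carrier_vec N" using DDi(1) W by simp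
  have "DD *\<^sub>v (DDi *\<^sub>v W) = W"
    using assoc_mult_mat_vec[OF DDc DDi(1) W] DDi(2) W by simp
  then have "ip2 W V = ip2 (DD *\<^sub>v (DDi *\<^sub>v W)) V" by simp
  also have "cmod \<dots> \<le> wnorm DD (DDi *\<^sub>v W) * wnorm DD V"
    by (rule formM_cs[OF DDh DDpsd Z V])
  finally show ?thesis using wDi[OF W] by simp
qed

lemma boundB: "induced_norm N DD (1\<^sub>m N - A2i * A1) \<le> 2 * d / g"
proof (rule induced_le[OF DDc], intro ballI impI)
  fix V :: "complex vec" assume V: "V \<in> carrier_vec N" and V1: "wnorm DD V \<le> 1"
  define M where "M = 1\<^sub>m N - A2i * A1"
  have Mc: "M \<in> carrier_mat N N" unfolding M_def using A2i(1) A1c by (intro minus_carrier_mat) auto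
  define X where "X = M *\<^sub>v V"
  have X: "X \<in> carrier_vec N" unfolding X_def using Mc V by simp
  have "A2 * M = A2 * 1\<^sub>m N - A2 * (A2i * A1)"
    unfolding M_def using A2c A2i(1) A1c by (subst mult_minus_distrib_mat) auto
  also have "\<dots> = A2 - A1"
    using A2c A2i A1c by (simp add: assoc_mult_mat[symmetric, of A2 N N A2i N A1 N])
  finally have AM: "A2 * M = A2 - A1" .
  have A2X: "A2 *\<^sub>v X = A2 *\<^sub>v V - A1 *\<^sub>v V"
    unfolding X_def using assoc_mult_mat_vec[OF A2c Mc V] AM minus_mult_distrib_mat_vec[OF A2c A1c V] by simp
  have b: "\<forall>W\<in>carrier_vec N. cmod (a2 (uu X) (uu W)) \<le> d * nH (uu W)"
  proof
    fix W :: "complex vec" assume W: "W \<in> carrier_vec N"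
    have "a2 (uu X) (uu W) = a2 (uu V) (uu W) - a1 (uu V) (uu W)"
      using ipA2[OF X W] A2X ip2_diff_l[of "A2 *\<^sub>v V" N "A1 *\<^sub>v V" W] A2c A1c V W ipA1 ipA2 by simp
    then have "cmod (a2 (uu X) (uu W)) = cmod (a1 (uu V) (uu W) - a2 (uu V) (uu W))"
      by (simp add: norm_minus_commute)
    also have "\<dots> \<le> d * nH (uu V) * nH (uu W)" using dbound uin V W by blast
    also have "\<dots> \<le> d * 1 * nH (uu W)"
      using DDn V V1 d0 nH_nn[OF W] by (intro mult_right_mono mult_left_mono) auto
    finally show "cmod (a2 (uu X) (uu W)) \<le> d * nH (uu W)" by simp
  qed
  have "nH (uu X) \<le> 2 * d / g" by (rule key[OF X d0 b])
  then show "wnorm DD (M *\<^sub>v V) \<le> 2 * d / g" using DDn X unfolding X_def by simp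
qed

end

context disc begin

lemma C_setup: assumes W: "W \<in> carrier_vec N"
  shows "A2i *\<^sub>v W \<in> carrier_vec N"
    and "(1\<^sub>m N - A1 * A2i) *\<^sub>v W \<in> carrier_vec N"
    and "\<forall>Z\<in>carrier_vec N. ip2 ((1\<^sub>m N - A1 * A2i) *\<^sub>v W) Z
          = a2 (uu (A2i *\<^sub>v W)) (uu Z) - a1 (uu (A2i *\<^sub>v W)) (uu Z)"
    and "\<forall>Z\<in>carrier_vec N. ip2 (A2 *\<^sub>v (A2i *\<^sub>v W)) Z = ip2 W Z"
proof -
  define X where "X = A2i *\<^sub>v W"
  have X: "X \<in> carrier_vec N" unfolding X_def using A2i(1) W by simp
  then show "A2i *\<^sub>v W \<in> carrier_vec N" unfolding X_def .
  have A1A2i: "A1 * A2i \<in> carrier_mat N N" using A1c A2i(1) by simp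
  have Y: "(1\<^sub>m N - A1 * A2i) *\<^sub>v W = W - A1 *\<^sub>v X"
    unfolding X_def using minus_mult_distrib_mat_vec[OF one_carrier_mat A1A2i W] W
      assoc_mult_mat_vec[OF A1c A2i(1) W] by simp
  have A2X: "A2 *\<^sub>v X = W" unfolding X_def
    using assoc_mult_mat_vec[OF A2c A2i(1) W] A2i(2) W by simp
  show "(1\<^sub>m N - A1 * A2i) *\<^sub>v W \<in> carrier_vec N" unfolding Y using W A1c X by simp
  show "\<forall>Z\<in>carrier_vec N. ip2 (A2 *\<^sub>v (A2i *\<^sub>v W)) Z = ip2 W Z"
    using A2X unfolding X_def by simp
  show "\<forall>Z\<in>carrier_vec N. ip2 ((1\<^sub>m N - A1 * A2i) *\<^sub>v W) Z
          = a2 (uu (A2i *\<^sub>v W)) (uu Z) - a1 (uu (A2i *\<^sub>v W)) (uu Z)"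
  proof
    fix Z :: "complex vec" assume Z: "Z \<in> carrier_vec N"
    have A1X: "A1 *\<^sub>v X \<in> carrier_vec N" using A1c X by simp
    have "ip2 ((1\<^sub>m N - A1 * A2i) *\<^sub>v W) Z = ip2 W Z - ip2 (A1 *\<^sub>v X) Z"
      unfolding Y using ip2_diff_l[OF W A1X Z] .
    also have "\<dots> = a2 (uu X) (uu Z) - a1 (uu X) (uu Z)"
      using A2X ipA2[OF X Z] ipA1[OF X Z] by simp
    finally show "ip2 ((1\<^sub>m N - A1 * A2i) *\<^sub>v W) Z
          = a2 (uu (A2i *\<^sub>v W)) (uu Z) - a1 (uu (A2i *\<^sub>v W)) (uu Z)" unfolding X_def .
  qed
qed

lemma boundC: "induced_norm N DDi (1\<^sub>m N - A1 * A2i) \<le> 2 * d / g"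
proof (rule induced_le[OF DDi(1)], intro ballI impI)
  fix W :: "complex vec" assume W: "W \<in> carrier_vec N" and W1: "wnorm DDi W \<le> 1"
  define X where "X = A2i *\<^sub>v W"
  define Y where "Y = (1\<^sub>m N - A1 * A2i) *\<^sub>v W"
  note cs = C_setup[OF W, folded X_def Y_def]
  have X: "X \<in> carrier_vec N" and Y: "Y \<in> carrier_vec N" using cs by auto
  define Z where "Z = DDi *\<^sub>v Y"
  have Z: "Z \<in> carrier_vec N" unfolding Z_def using DDi(1) Y by simp
  have b: "\<forall>V\<in>carrier_vec N. cmod (a2 (uu X) (uu V)) \<le> 1 * nH (uu V)"
  proof
    fix V :: "complex vec" assume V: "V \<in> carrier_vec N"
    have "a2 (uu X) (uu V) = ip2 W V" using cs(4) V ipA2[OF X V] by simp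
    then have "cmod (a2 (uu X) (uu V)) \<le> wnorm DDi W * wnorm DD V" using dual_cs[OF W V] by simp
    also have "\<dots> \<le> 1 * nH (uu V)"
    proof -
      have e: "wnorm DD V = nH (uu V)" using DDn V by simp
      show ?thesis unfolding e by (rule mult_right_mono[OF W1 nH_nn[OF V]])
    qed
    finally show "cmod (a2 (uu X) (uu V)) \<le> 1 * nH (uu V)" .
  qed
  have kX: "nH (uu X) \<le> 2 * 1 / g" by (rule key[OF X _ b]) simp
  define r where "r = Re (ip2 (DD *\<^sub>v Z) Z)"
  have r0: "0 \<le> r" unfolding r_def using DDpsd Z by blast
  have wY: "wnorm DDi Y = sqrt r" unfolding r_def Z_def wnorm_def using DDi_Re[OF Y] by simp
  have wZ: "wnorm DD Z = sqrt r" unfolding r_def wnorm_def ..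
  have "r = Re (ip2 Y Z)"
    unfolding r_def Z_def using assoc_mult_mat_vec[OF DDc DDi(1) Y] DDi(2) Y by simp
  also have "\<dots> \<le> cmod (ip2 Y Z)" by (rule complex_Re_le_cmod)
  also have "\<dots> = cmod (a1 (uu X) (uu Z) - a2 (uu X) (uu Z))"
    using cs(3) Z by (simp add: norm_minus_commute)
  also have "\<dots> \<le> d * nH (uu X) * nH (uu Z)" using dbound uin X Z by blast
  also have "\<dots> = d * nH (uu X) * sqrt r" using DDn Z wZ by simp
  finally have s: "sqrt r * sqrt r \<le> (d * nH (uu X)) * sqrt r" using r0 by simp
  have "sqrt r \<le> d * nH (uu X)"
  proof (cases "r = 0")
    case True then show ?thesis using d0 nH_nn[OF X] by simp
  next
    case False then have "0 < sqrt r" using r0 by simp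
    then show ?thesis using mult_right_le_imp_le[OF s] by simp
  qed
  also have "\<dots> \<le> d * (2 * 1 / g)" using kX d0 by (intro mult_left_mono) auto
  finally show "wnorm DDi ((1\<^sub>m N - A1 * A2i) *\<^sub>v W) \<le> 2 * d / g"
    using wY unfolding Y_def by (simp add: mult.commute)
qed

end

context disc begin

lemma B_setup: assumes V: "V \<in> carrier_vec N"
  shows "(1\<^sub>m N - A2i * A1) *\<^sub>v V \<in> carrier_vec N"
    and "\<forall>W\<in>carrier_vec N. a2 (uu ((1\<^sub>m N - A2i * A1) *\<^sub>v V)) (uu W) = a2 (uu V) (uu W) - a1 (uu V) (uu W)"
proof -
  define M where "M = 1\<^sub>m N - A2i * A1"
  have Mc: "M \<in> carrier_mat N N" unfolding M_def using A2i(1) A1c by (intro minus_carrier_mat) auto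
  define X where "X = M *\<^sub>v V"
  have X: "X \<in> carrier_vec N" unfolding X_def using Mc V by simp
  then show "(1\<^sub>m N - A2i * A1) *\<^sub>v V \<in> carrier_vec N" unfolding X_def M_def .
  have "A2 * M = A2 * 1\<^sub>m N - A2 * (A2i * A1)"
    unfolding M_def using A2c A2i(1) A1c by (subst mult_minus_distrib_mat) auto
  also have "\<dots> = A2 - A1"
    using A2c A2i A1c by (simp add: assoc_mult_mat[symmetric, of A2 N N A2i N A1 N])
  finally have AM: "A2 * M = A2 - A1" .
  have A2X: "A2 *\<^sub>v X = A2 *\<^sub>v V - A1 *\<^sub>v V"
    unfolding X_def using assoc_mult_mat_vec[OF A2c Mc V] AM minus_mult_distrib_mat_vec[OF A2c A1c V] by simp
  show "\<forall>W\<in>carrier_vec N. a2 (uu ((1\<^sub>m N - A2i * A1) *\<^sub>v V)) (uu W) = a2 (uu V) (uu W) - a1 (uu V) (uu W)"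
  proof
    fix W :: "complex vec" assume W: "W \<in> carrier_vec N"
    have "a2 (uu X) (uu W) = a2 (uu V) (uu W) - a1 (uu V) (uu W)"
      using ipA2[OF X W] A2X ip2_diff_l[of "A2 *\<^sub>v V" N "A1 *\<^sub>v V" W] A2c A1c V W ipA1 ipA2 by simp
    then show "a2 (uu ((1\<^sub>m N - A2i * A1) *\<^sub>v V)) (uu W) = a2 (uu V) (uu W) - a1 (uu V) (uu W)"
      unfolding X_def M_def .
  qed
qed

lemma norm2_nn: "0 \<le> norm2 V" unfolding norm2_def using ip2_self_nonneg by simp

lemma n0_nn: "0 \<le> n0 x" using ipn_nonneg[OF ip0] by simp

lemma part2:
  assumes db0: "\<forall>u\<in>H. \<forall>v\<in>H. cmod (a1 u v - a2 u v) \<le> d * n0 u * n0 v"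
    and mm: "0 < mm" and mp: "0 < mp"
    and mb: "\<forall>V\<in>carrier_vec N. mm * norm2 V \<le> n0 (uu V) \<and> n0 (uu V) \<le> mp * norm2 V"
  shows "induced_norm2 N (1\<^sub>m N - A2i * A1) \<le> 2 * (mp / mm) * d / g"
    and "induced_norm2 N (1\<^sub>m N - A1 * A2i) \<le> 2 * (mp / mm) * d / g"
proof -
  have n2: "\<And>V. V \<in> carrier_vec N \<Longrightarrow> norm2 V \<le> nH (uu V) / mm"
  proof -
    fix V :: "complex vec" assume V: "V \<in> carrier_vec N"
    have "mm * norm2 V \<le> nH (uu V)" using mb V nle uin[OF V] by fastforce
    then show "norm2 V \<le> nH (uu V) / mm" using mm by (simp add: field_simps)
  qed
  show "induced_norm2 N (1\<^sub>m N - A2i * A1) \<le> 2 * (mp / mm) * d / g"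
  proof (rule induced2_le, intro ballI impI)
    fix V :: "complex vec" assume V: "V \<in> carrier_vec N" and V1: "norm2 V \<le> 1"
    define X where "X = (1\<^sub>m N - A2i * A1) *\<^sub>v V"
    note bs = B_setup[OF V, folded X_def]
    have X: "X \<in> carrier_vec N" using bs by simp
    have b: "\<forall>W\<in>carrier_vec N. cmod (a2 (uu X) (uu W)) \<le> (d * mp) * nH (uu W)"
    proof
      fix W :: "complex vec" assume W: "W \<in> carrier_vec N"
      have "cmod (a2 (uu X) (uu W)) = cmod (a1 (uu V) (uu W) - a2 (uu V) (uu W))"
        using bs W by (simp add: norm_minus_commute)
      also have "\<dots> \<le> d * n0 (uu V) * n0 (uu W)" using db0 uin V W by blast
      also have "\<dots> \<le> d * mp * nH (uu W)"
      proof -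
        have "n0 (uu V) \<le> mp" using mb V V1 mp
          by (meson mult_left_le order_trans less_imp_le norm2_nn)
        moreover have "n0 (uu W) \<le> nH (uu W)" using nle uin[OF W] by blast
        ultimately show ?thesis using d0 n0_nn mp
          by (simp add: mult.assoc mult_left_mono mult_mono)
      qed
      finally show "cmod (a2 (uu X) (uu W)) \<le> (d * mp) * nH (uu W)" .
    qed
    have "nH (uu X) \<le> 2 * (d * mp) / g" by (rule key[OF X _ b]) (use d0 mp in simp)
    then have "norm2 X \<le> (2 * (d * mp) / g) / mm" using n2[OF X] mm
      by (meson divide_right_mono order_trans less_imp_le)
    then show "norm2 ((1\<^sub>m N - A2i * A1) *\<^sub>v V) \<le> 2 * (mp / mm) * d / g"
      unfolding X_def by (simp add: field_simps)
  qed
  show "induced_norm2 N (1\<^sub>m N - A1 * A2i) \<le> 2 * (mp / mm) * d / g"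
  proof (rule induced2_le, intro ballI impI)
    fix W :: "complex vec" assume W: "W \<in> carrier_vec N" and W1: "norm2 W \<le> 1"
    define X where "X = A2i *\<^sub>v W"
    define Y where "Y = (1\<^sub>m N - A1 * A2i) *\<^sub>v W"
    note cs = C_setup[OF W, folded X_def Y_def]
    have X: "X \<in> carrier_vec N" and Y: "Y \<in> carrier_vec N" using cs by auto
    have b: "\<forall>V\<in>carrier_vec N. cmod (a2 (uu X) (uu V)) \<le> (1 / mm) * nH (uu V)"
    proof
      fix V :: "complex vec" assume V: "V \<in> carrier_vec N"
      have "a2 (uu X) (uu V) = ip2 W V" using cs(4) V ipA2[OF X V] by simp
      then have "cmod (a2 (uu X) (uu V)) \<le> norm2 W * norm2 V" using eucl_cs[OF W V] by simp
      also have "\<dots> \<le> norm2 V" using mult_right_mono[OF W1 norm2_nn[of V]] by simp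
      also have "\<dots> \<le> nH (uu V) / mm" by (rule n2[OF V])
      finally show "cmod (a2 (uu X) (uu V)) \<le> (1 / mm) * nH (uu V)" by simp
    qed
    have kX: "nH (uu X) \<le> 2 * (1 / mm) / g" by (rule key[OF X _ b]) (use mm in simp)
    have "(norm2 Y)\<^sup>2 = Re (ip2 Y Y)" unfolding norm2_def using ip2_self_nonneg by simp
    also have "\<dots> \<le> cmod (ip2 Y Y)" by (rule complex_Re_le_cmod)
    also have "\<dots> = cmod (a1 (uu X) (uu Y) - a2 (uu X) (uu Y))"
      using cs(3) Y by (simp add: norm_minus_commute)
    also have "\<dots> \<le> d * n0 (uu X) * n0 (uu Y)" using db0 uin X Y by blast
    also have "\<dots> \<le> d * nH (uu X) * (mp * norm2 Y)"
    proof -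
      have "n0 (uu X) \<le> nH (uu X)" using nle uin[OF X] by blast
      moreover have "n0 (uu Y) \<le> mp * norm2 Y" using mb Y by blast
      ultimately have "n0 (uu X) * n0 (uu Y) \<le> nH (uu X) * (mp * norm2 Y)"
        using n0_nn nH_nn[OF X] by (intro mult_mono) auto
      then show ?thesis using d0 by (simp add: mult.assoc mult_left_mono)
    qed
    finally have s: "norm2 Y * norm2 Y \<le> (d * nH (uu X) * mp) * norm2 Y"
      by (simp add: power2_eq_square mult_ac)
    have "norm2 Y \<le> d * nH (uu X) * mp"
    proof (cases "norm2 Y = 0")
      case True then show ?thesis using d0 nH_nn[OF X] mp by simp
    next
      case False then have "0 < norm2 Y" using norm2_nn[of Y] by simp
      then show ?thesis using mult_right_le_imp_le[OF s] by simp
    qed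
    also have "\<dots> \<le> d * (2 * (1 / mm) / g) * mp"
      using kX d0 mp by (intro mult_right_mono mult_left_mono) auto
    finally show "norm2 ((1\<^sub>m N - A1 * A2i) *\<^sub>v W) \<le> 2 * (mp / mm) * d / g"
      unfolding Y_def by (simp add: field_simps)
  qed
qed

end

context cvs begin

lemma aform_sesq: assumes ip0: "cinner_on sc UNIV ip0" and sH: "subspace H"
  and D: "clinear_on sc H D" and mu: "clinear_on sc UNIV mu" and eps: "clinear_on sc UNIV eps"
  and b: "bdd_sesq_on sc H nH b"
  shows "sesq_on sc H (aform ip0 D b mu eps)"
proof -
  have Da: "\<And>x y. x \<in> H \<Longrightarrow> y \<in> H \<Longrightarrow> D (x + y) = D x + D y" and Ds: "\<And>c x. x \<in> H \<Longrightarrow> D (sc c x) = sc c (D x)"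
    using D unfolding clinear_on_def by auto
  have ma: "\<And>x y. mu (x + y) = mu x + mu y" and ms: "\<And>c x. mu (sc c x) = sc c (mu x)"
    using mu unfolding clinear_on_def by auto
  have ea: "\<And>x y. eps (x + y) = eps x + eps y" and es: "\<And>c x. eps (sc c x) = sc c (eps x)"
    using eps unfolding clinear_on_def by auto
  have ba: "\<And>x y z. x \<in> H \<Longrightarrow> y \<in> H \<Longrightarrow> z \<in> H \<Longrightarrow> b (x + y) z = b x z + b y z \<and> b z (x + y) = b z x + b z y"
    and bs: "\<And>c x y. x \<in> H \<Longrightarrow> y \<in> H \<Longrightarrow> b (sc c x) y = c * b x y \<and> b x (sc c y) = cnj c * b x y"
    using b unfolding bdd_sesq_on_def by auto
  have ial: "\<And>x y z. ip0 (x + y) z = ip0 x z + ip0 y z" using cip_add_l[OF ip0] by simp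
  have iar: "\<And>x y z. ip0 z (x + y) = ip0 z x + ip0 z y" using cip_add_r[OF ip0] by simp
  have isl: "\<And>c x y. ip0 (sc c x) y = c * ip0 x y" using cip_scale_l[OF ip0] by simp
  have isr: "\<And>c x y. ip0 x (sc c y) = cnj c * ip0 x y" using cip_scale_r[OF ip0] by simp
  show ?thesis unfolding sesq_on_def aform_def
    using Da Ds ma ms ea es ba bs ial iar isl isr by (simp add: algebra_simps)
qed

lemma invnorm_pos: assumes ipH: "cinner_on sc H ipH" and a: "sesq_on sc H a"
  and inv: "form_op_invertible sc H (ipnorm ipH) a" and w: "w \<in> H" "w \<noteq> 0"
  shows "0 < form_op_inv_norm sc H (ipnorm ipH) a"
proof -
  have sH: "subspace H" using cip_sub[OF ipH] .
  have pw: "0 < ipnorm ipH w" using ipn_pos[OF ipH w] .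
  define w' where "w' = sc (of_real (1 / ipnorm ipH w)) w"
  have w'H: "w' \<in> H" unfolding w'_def using subspace_scale[OF sH w(1)] .
  have nw': "ipnorm ipH w' = 1" unfolding w'_def using ipn_scale[OF ipH w(1)] pw by (simp add: norm_divide)
  have w'0: "w' \<noteq> 0" using nw' ipn_zero[OF ipH w'H] by auto
  define f where "f = (\<lambda>v. ipH w' v)"
  have fd: "dual_elem sc H (ipnorm ipH) f"
    unfolding dual_elem_def f_def
  proof (intro conjI ballI allI exI[of _ 1])
    fix x y assume "x \<in> H" "y \<in> H"
    then show "ipH w' (x + y) = ipH w' x + ipH w' y" using cip_add_r[OF ipH w'H] by simp
  next
    fix c x assume "x \<in> H"
    then show "ipH w' (sc c x) = cnj c * ipH w' x" using cip_scale_r[OF ipH w'H] by simp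
  next
    fix x assume "x \<in> H"
    then show "cmod (ipH w' x) \<le> 1 * ipnorm ipH x" using cip_cs[OF ipH w'H] nw' by simp
  qed
  have fn: "dual_norm H (ipnorm ipH) f \<le> 1"
    unfolding dual_norm_def
  proof (rule cSup_least)
    have "cmod (f 0) \<in> {cmod (f x) |x. x \<in> H \<and> ipnorm ipH x \<le> 1}"
      using subspace_0[OF sH] ipn_zero[OF ipH subspace_0[OF sH]] by (intro CollectI exI[of _ 0]) auto
    then show "{cmod (f x) |x. x \<in> H \<and> ipnorm ipH x \<le> 1} \<noteq> {}" by blast
  next
    fix t assume "t \<in> {cmod (f x) |x. x \<in> H \<and> ipnorm ipH x \<le> 1}"
    then obtain x where x: "x \<in> H" "ipnorm ipH x \<le> 1" "t = cmod (f x)" by blast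
    have "cmod (f x) \<le> ipnorm ipH w' * ipnorm ipH x" unfolding f_def by (rule cip_cs[OF ipH w'H x(1)])
    then show "t \<le> 1" using x nw' by simp
  qed
  obtain K where K: "\<forall>u\<in>H. ipnorm ipH u \<le> K * dual_norm H (ipnorm ipH) (\<lambda>v. a u v)"
    using inv unfolding form_op_invertible_def by blast
  have ex1: "\<And>g. dual_elem sc H (ipnorm ipH) g \<Longrightarrow> \<exists>!u. u \<in> H \<and> (\<forall>v\<in>H. a u v = g v)"
    using inv unfolding form_op_invertible_def by blast
  have foi: "\<And>g. dual_elem sc H (ipnorm ipH) g \<Longrightarrow> form_op_inv H a g \<in> H \<and> (\<forall>v\<in>H. a (form_op_inv H a g) v = g v)"
    unfolding form_op_inv_def by (rule theI'[OF ex1])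
  define u where "u = form_op_inv H a f"
  have u: "u \<in> H" "\<forall>v\<in>H. a u v = f v" using foi[OF fd] unfolding u_def by auto
  have u0: "u \<noteq> 0"
  proof
    assume "u = 0"
    then have "f w' = 0" using u sesq_zero_l[OF a sH w'H] w'H by metis
    then have "w' = 0" unfolding f_def using cip_def0[OF ipH w'H] by simp
    then show False using w'0 by simp
  qed
  have pu: "0 < ipnorm ipH u" using ipn_pos[OF ipH u(1) u0] .
  have bdd: "bdd_above {ipnorm ipH (form_op_inv H a g) |g. dual_elem sc H (ipnorm ipH) g \<and> dual_norm H (ipnorm ipH) g \<le> 1}"
  proof (rule bdd_aboveI[where M="max K 0"])
    fix t assume "t \<in> {ipnorm ipH (form_op_inv H a g) |g. dual_elem sc H (ipnorm ipH) g \<and> dual_norm H (ipnorm ipH) g \<le> 1}"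
    then obtain g where g: "dual_elem sc H (ipnorm ipH) g" "dual_norm H (ipnorm ipH) g \<le> 1"
      "t = ipnorm ipH (form_op_inv H a g)" by blast
    define ug where "ug = form_op_inv H a g"
    have ug: "ug \<in> H" "\<forall>v\<in>H. a ug v = g v" using foi[OF g(1)] unfolding ug_def by auto
    have "dual_norm H (ipnorm ipH) (\<lambda>v. a ug v) = dual_norm H (ipnorm ipH) g"
      unfolding dual_norm_def using ug(2) by (metis (no_types, lifting))
    then have "t \<le> K * dual_norm H (ipnorm ipH) g" using K ug(1) g(3) unfolding ug_def by metis
    moreover have "0 \<le> dual_norm H (ipnorm ipH) g" using dual_bound(2)[OF ipH g(1)] .
    ultimately show "t \<le> max K 0" using g(2)
      by (metis max.cobounded1 max.cobounded2 mult_left_le mult_right_mono order_trans)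
  qed
  have "ipnorm ipH u \<le> form_op_inv_norm sc H (ipnorm ipH) a"
    unfolding form_op_inv_norm_def u_def
    by (rule cSup_upper[OF _ bdd]) (use fd fn in blast)
  then show ?thesis using pu by simp
qed

end

theorem theorem4p2:
  fixes sc :: "complex \<Rightarrow> 'a::ab_group_add \<Rightarrow> 'a"
    and ip0 ipH :: "'a \<Rightarrow> 'a \<Rightarrow> complex"
    and H :: "'a set"
    and D :: "'a \<Rightarrow> 'a"
    and b :: "'a \<Rightarrow> 'a \<Rightarrow> complex"
    and mu1inv mu2inv eps1 eps2 :: "'a \<Rightarrow> 'a"
    and phi :: "nat \<Rightarrow> nat \<Rightarrow> 'a"
    and DD :: "nat \<Rightarrow> complex mat"
    and mm mp :: "nat \<Rightarrow> real"
    and C1 :: real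
  defines "n0 \<equiv> ipnorm ip0"
    and "nH \<equiv> ipnorm ipH"
    and "a1 \<equiv> aform ip0 D b mu1inv eps1"
    and "a2 \<equiv> aform ip0 D b mu2inv eps2"
    and "HN \<equiv> (\<lambda>N. galerkin_space sc (phi N) N)"
    and "A1 \<equiv> (\<lambda>N. galerkin_mat (aform ip0 D b mu1inv eps1) (phi N) N)"
    and "A2 \<equiv> (\<lambda>N. galerkin_mat (aform ip0 D b mu2inv eps2) (phi N) N)"
    and "invA1 \<equiv> form_op_inv_norm sc H (ipnorm ipH) (aform ip0 D b mu1inv eps1)"
    and "dmu \<equiv> op_norm UNIV (ipnorm ip0) (ipnorm ip0) (\<lambda>x. mu1inv x - mu2inv x)"
    and "deps \<equiv> op_norm UNIV (ipnorm ip0) (ipnorm ip0) (\<lambda>x. eps1 x - eps2 x)"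
  assumes vs: "vector_space sc"
    and H0_hilbert: "hilbert_on sc UNIV ip0"
    and H_hilbert: "hilbert_on sc H ipH"
    and norm_le: "\<forall>v\<in>H. n0 v \<le> nH v"
    and D_lin: "clinear_on sc H D" and D_bdd: "bounded_op H nH n0 D"
    and D_norm: "op_norm H nH n0 D \<le> 1"
    and b_cont: "bdd_sesq_on sc H nH b"
    and mu1_op: "clinear_on sc UNIV mu1inv \<and> bounded_op UNIV n0 n0 mu1inv"
    and mu2_op: "clinear_on sc UNIV mu2inv \<and> bounded_op UNIV n0 n0 mu2inv"
    and eps1_op: "clinear_on sc UNIV eps1 \<and> bounded_op UNIV n0 n0 eps1"
    and eps2_op: "clinear_on sc UNIV eps2 \<and> bounded_op UNIV n0 n0 eps2"
    and garding1: "\<exists>CG1>0. \<exists>CG2>0. \<forall>v\<in>H.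
        cmod (a1 v v + complex_of_real (CG2 * (n0 v)\<^sup>2)) \<ge> CG1 * (nH v)\<^sup>2"
    and garding2: "\<exists>CG1>0. \<exists>CG2>0. \<forall>v\<in>H.
        cmod (a2 v v + complex_of_real (CG2 * (n0 v)\<^sup>2)) \<ge> CG1 * (nH v)\<^sup>2"
    and phi_in: "\<forall>N\<ge>1. \<forall>j<N. phi N j \<in> H"
    and phi_indep: "\<forall>N\<ge>1. \<forall>V\<in>carrier_vec N. combo sc (phi N) V = 0 \<longrightarrow> V = 0\<^sub>v N"
    and DD_hpd: "\<forall>N\<ge>1. hermitian_pd N (DD N)"
    and DD_norm: "\<forall>N\<ge>1. \<forall>V\<in>carrier_vec N. nH (combo sc (phi N) V) = wnorm (DD N) V"
    and m_pos: "\<forall>N\<ge>1. 0 < mm N \<and> 0 < mp N"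
    and m_bounds: "\<forall>N\<ge>1. \<forall>V\<in>carrier_vec N.
        mm N * norm2 V \<le> n0 (combo sc (phi N) V) \<and> n0 (combo sc (phi N) V) \<le> mp N * norm2 V"
    and A1_inv: "form_op_invertible sc H nH a1"
    and C1_pos: "C1 > 0"
    and infsup: "\<forall>N\<ge>1. (INF u\<in>HN N - {0}. SUP v\<in>HN N - {0}.
          ereal (cmod (a1 u v) / (nH u * nH v))) \<ge> ereal (1 / (C1 * invA1))"
    and nondeg: "\<forall>N\<ge>1. \<forall>v\<in>HN N - {0}. (SUP u\<in>HN N - {0}. ereal (cmod (a1 u v))) > 0"
    and small: "(dmu + deps) * C1 * invA1 \<le> 1 / 2"
  shows "\<forall>N\<ge>1. invertible_mat (A2 N) \<and>
     max (induced_norm N (DD N) (1\<^sub>m N - mat_inv N (A2 N) * A1 N))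
         (induced_norm N (mat_inv N (DD N)) (1\<^sub>m N - A1 N * mat_inv N (A2 N)))
       \<le> 2 * (dmu + deps) * C1 * invA1 \<and>
     (mu1inv = mu2inv \<longrightarrow>
       max (induced_norm2 N (1\<^sub>m N - mat_inv N (A2 N) * A1 N))
           (induced_norm2 N (1\<^sub>m N - A1 N * mat_inv N (A2 N)))
         \<le> 2 * (mp N / mm N) * deps * C1 * invA1)"
proof -
  interpret cvs sc using vs unfolding cvs_def .  
  have ip0: "cinner_on sc UNIV ip0" using H0_hilbert unfolding hilbert_on_def by (rule conjunct1)
  have ipH: "cinner_on sc H ipH" using H_hilbert unfolding hilbert_on_def by (rule conjunct1)
  have sH: "subspace H" using cip_sub[OF ipH] .
  have a1s: "sesq_on sc H a1" unfolding a1_def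
    by (rule aform_sesq[OF ip0 sH D_lin conjunct1[OF mu1_op] conjunct1[OF eps1_op] b_cont])
  have a2s: "sesq_on sc H a2" unfolding a2_def
    by (rule aform_sesq[OF ip0 sH D_lin conjunct1[OF mu2_op] conjunct1[OF eps2_op] b_cont])
  have n0e: "n0 = ipnorm ip0" using n0_def by simp
  have nHe: "nH = ipnorm ipH" using nH_def by simp
  have diffop: "\<And>f1 f2. clinear_on sc UNIV f1 \<and> bounded_op UNIV n0 n0 f1 \<Longrightarrow>
      clinear_on sc UNIV f2 \<and> bounded_op UNIV n0 n0 f2 \<Longrightarrow>
      (\<forall>x. ipnorm ip0 (f1 x - f2 x) \<le> op_norm UNIV (ipnorm ip0) (ipnorm ip0) (\<lambda>x. f1 x - f2 x) * ipnorm ip0 x)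
      \<and> 0 \<le> op_norm UNIV (ipnorm ip0) (ipnorm ip0) (\<lambda>x. f1 x - f2 x)"
  proof -
    fix f1 f2 :: "'a \<Rightarrow> 'a"
    assume h1: "clinear_on sc UNIV f1 \<and> bounded_op UNIV n0 n0 f1"
      and h2: "clinear_on sc UNIV f2 \<and> bounded_op UNIV n0 n0 f2"
    obtain K1 where K1: "\<forall>x. ipnorm ip0 (f1 x) \<le> K1 * ipnorm ip0 x"
      using h1 unfolding bounded_op_def n0e by blast
    obtain K2 where K2: "\<forall>x. ipnorm ip0 (f2 x) \<le> K2 * ipnorm ip0 x"
      using h2 unfolding bounded_op_def n0e by blast
    have lin: "\<forall>c. \<forall>x\<in>UNIV. f1 (sc c x) - f2 (sc c x) = sc c (f1 x - f2 x)"
      using h1 h2 unfolding clinear_on_def by (simp add: scale_right_diff_distrib)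
    have bnd: "\<forall>x\<in>UNIV. ipnorm ip0 (f1 x - f2 x) \<le> (K1 + K2) * ipnorm ip0 x"
    proof
      fix x :: 'a
      have "ipnorm ip0 (f1 x - f2 x) \<le> ipnorm ip0 (f1 x) + ipnorm ip0 (f2 x)"
        using ipn_diff[OF ip0] by simp
      also have "\<dots> \<le> (K1 + K2) * ipnorm ip0 x" using K1 K2 by (simp add: distrib_right add_mono)
      finally show "ipnorm ip0 (f1 x - f2 x) \<le> (K1 + K2) * ipnorm ip0 x" .
    qed
    show "(\<forall>x. ipnorm ip0 (f1 x - f2 x) \<le> op_norm UNIV (ipnorm ip0) (ipnorm ip0) (\<lambda>x. f1 x - f2 x) * ipnorm ip0 x)
      \<and> 0 \<le> op_norm UNIV (ipnorm ip0) (ipnorm ip0) (\<lambda>x. f1 x - f2 x)"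
      using opn_lin[OF ip0 ip0 lin bnd] by simp
  qed
  have dmuB: "\<forall>x. ipnorm ip0 (mu1inv x - mu2inv x) \<le> dmu * ipnorm ip0 x" and dmu0: "0 \<le> dmu"
    using diffop[OF mu1_op mu2_op] unfolding dmu_def by auto
  have depsB: "\<forall>x. ipnorm ip0 (eps1 x - eps2 x) \<le> deps * ipnorm ip0 x" and deps0: "0 \<le> deps"
    using diffop[OF eps1_op eps2_op] unfolding deps_def by auto
  have DB: "\<forall>x\<in>H. ipnorm ip0 (D x) \<le> ipnorm ipH x"
  proof -
    obtain K where K: "\<forall>x\<in>H. ipnorm ip0 (D x) \<le> K * ipnorm ipH x"
      using D_bdd unfolding bounded_op_def n0e nHe by blast
    have lin: "\<forall>c. \<forall>x\<in>H. D (sc c x) = sc c (D x)" using D_lin unfolding clinear_on_def by blast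
    have "\<forall>x\<in>H. ipnorm ip0 (D x) \<le> op_norm H (ipnorm ipH) (ipnorm ip0) D * ipnorm ipH x"
      using opn_lin(1)[OF ipH ip0 lin K] .
    moreover have "op_norm H (ipnorm ipH) (ipnorm ip0) D \<le> 1" using D_norm unfolding n0e nHe .
    ultimately show ?thesis using ipn_nonneg[OF ipH]
      by (metis mult_right_mono mult_1 order_trans)
  qed
  have dform: "\<forall>u\<in>H. \<forall>v\<in>H. a1 u v - a2 u v
      = ip0 (mu1inv (D u) - mu2inv (D u)) (D v) - ip0 (eps1 u - eps2 u) v"
    unfolding a1_def a2_def aform_def using cip_diff_l[OF ip0] by simp
  have dgen: "\<forall>u\<in>H. \<forall>v\<in>H. cmod (a1 u v - a2 u v)
      \<le> dmu * ipnorm ip0 (D u) * ipnorm ip0 (D v) + deps * ipnorm ip0 u * ipnorm ip0 v"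
  proof (intro ballI)
    fix u v assume u: "u \<in> H" and v: "v \<in> H"
    have "cmod (a1 u v - a2 u v) \<le> cmod (ip0 (mu1inv (D u) - mu2inv (D u)) (D v)) + cmod (ip0 (eps1 u - eps2 u) v)"
      using dform u v norm_triangle_ineq4 by metis
    also have "\<dots> \<le> ipnorm ip0 (mu1inv (D u) - mu2inv (D u)) * ipnorm ip0 (D v) + ipnorm ip0 (eps1 u - eps2 u) * ipnorm ip0 v"
      using cip_cs[OF ip0] by (intro add_mono) auto
    also have "\<dots> \<le> (dmu * ipnorm ip0 (D u)) * ipnorm ip0 (D v) + (deps * ipnorm ip0 u) * ipnorm ip0 v"
      using dmuB depsB ipn_nonneg[OF ip0] by (intro add_mono mult_right_mono) auto
    finally show "cmod (a1 u v - a2 u v) \<le> dmu * ipnorm ip0 (D u) * ipnorm ip0 (D v) + deps * ipnorm ip0 u * ipnorm ip0 v" .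
  qed
  have dbound: "\<forall>u\<in>H. \<forall>v\<in>H. cmod (a1 u v - a2 u v) \<le> (dmu + deps) * ipnorm ipH u * ipnorm ipH v"
  proof (intro ballI)
    fix u v assume u: "u \<in> H" and v: "v \<in> H"
    have nl: "\<And>x. x \<in> H \<Longrightarrow> ipnorm ip0 x \<le> ipnorm ipH x" using norm_le unfolding n0e nHe by blast
    have p1: "ipnorm ip0 (D u) * ipnorm ip0 (D v) \<le> ipnorm ipH u * ipnorm ipH v"
      using DB u v ipn_nonneg[OF ip0] ipn_nonneg[OF ipH] by (intro mult_mono) auto
    have p2: "ipnorm ip0 u * ipnorm ip0 v \<le> ipnorm ipH u * ipnorm ipH v"
      using nl u v ipn_nonneg[OF ip0] ipn_nonneg[OF ipH] by (intro mult_mono) auto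
    have "cmod (a1 u v - a2 u v) \<le> dmu * (ipnorm ip0 (D u) * ipnorm ip0 (D v)) + deps * (ipnorm ip0 u * ipnorm ip0 v)"
      using dgen u v by (simp add: mult.assoc)
    also have "\<dots> \<le> dmu * (ipnorm ipH u * ipnorm ipH v) + deps * (ipnorm ipH u * ipnorm ipH v)"
      using p1 p2 dmu0 deps0 by (intro add_mono mult_left_mono) auto
    finally show "cmod (a1 u v - a2 u v) \<le> (dmu + deps) * ipnorm ipH u * ipnorm ipH v"
      by (simp add: algebra_simps)
  qed
  have w: "phi 1 0 \<in> H" "phi 1 0 \<noteq> 0"
  proof -
    show "phi 1 0 \<in> H" using phi_in by simp
    have c: "combo sc (phi 1) (vec 1 (\<lambda>_. 1)) = phi 1 0" unfolding combo_def by simp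
    have "vec 1 (\<lambda>_. 1) \<noteq> (0\<^sub>v 1 :: complex vec)"
      by (metis index_vec index_zero_vec(1) less_one zero_neq_one)
    then show "phi 1 0 \<noteq> 0" using phi_indep c by fastforce
  qed
  have A1inv': "form_op_invertible sc H (ipnorm ipH) a1" using A1_inv unfolding nHe .
  have ipos: "0 < invA1" unfolding invA1_def a1_def[symmetric]
    by (rule invnorm_pos[OF ipH a1s A1inv' w])
  define g where "g = 1 / (C1 * invA1)"
  have gpos: "0 < g" unfolding g_def using C1_pos ipos by simp
  have dg: "dmu + deps \<le> g / 2"
    unfolding g_def using small C1_pos ipos by (simp add: field_simps)
  have g2: "\<And>x. 2 * x / g = 2 * x * C1 * invA1" unfolding g_def by simp
  show ?thesis
  proof (intro allI impI)
    fix N :: nat assume N: "1 \<le> N"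
    have infs: "\<forall>u\<in>galerkin_space sc (phi N) N - {0}. \<forall>e>0. \<exists>v\<in>galerkin_space sc (phi N) N - {0}.
        (g - e) * ipnorm ipH u * ipnorm ipH v < cmod (a1 u v)"
    proof (intro ballI allI impI)
      fix u e assume u: "u \<in> galerkin_space sc (phi N) N - {0}" and e: "(0::real) < e"
      have GH: "\<And>x. x \<in> galerkin_space sc (phi N) N - {0} \<Longrightarrow> 0 < ipnorm ipH x"
      proof -
        fix x assume x: "x \<in> galerkin_space sc (phi N) N - {0}"
        then obtain V where V: "V \<in> carrier_vec N" "x = combo sc (phi N) V" unfolding galerkin_space_def by blast
        have "x \<in> H" using combo_in[OF sH _ V(1)] phi_in N V(2) by simp
        then show "0 < ipnorm ipH x" using ipn_pos[OF ipH] x by simp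
      qed
      have "ereal g \<le> (INF u\<in>HN N - {0}. SUP v\<in>HN N - {0}. ereal (cmod (a1 u v) / (nH u * nH v)))"
        using infsup N unfolding g_def by blast
      also have "\<dots> \<le> (SUP v\<in>HN N - {0}. ereal (cmod (a1 u v) / (nH u * nH v)))"
        using u unfolding HN_def by (intro INF_lower) simp
      finally have le: "ereal g \<le> (SUP v\<in>HN N - {0}. ereal (cmod (a1 u v) / (nH u * nH v)))" .
      have "ereal (g - e) < ereal g" using e by simp
      then have "ereal (g - e) < (SUP v\<in>HN N - {0}. ereal (cmod (a1 u v) / (nH u * nH v)))"
        using le by (rule less_le_trans)
      then obtain v where v: "v \<in> HN N - {0}" and lt: "g - e < cmod (a1 u v) / (nH u * nH v)"
        unfolding less_SUP_iff by auto
      have pu: "0 < ipnorm ipH u" using GH u .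
      have pv: "0 < ipnorm ipH v" using GH v unfolding HN_def by simp
      have "(g - e) * (ipnorm ipH u * ipnorm ipH v) < cmod (a1 u v)"
        using lt pu pv unfolding nHe by (simp add: pos_less_divide_eq)
      then show "\<exists>v\<in>galerkin_space sc (phi N) N - {0}. (g - e) * ipnorm ipH u * ipnorm ipH v < cmod (a1 u v)"
        using v unfolding HN_def by (intro bexI[of _ v]) (auto simp: mult.assoc)
    qed
    have DDh: "herm N (DD N)"
      using DD_hpd N unfolding hermitian_pd_def herm_def by (metis (no_types, lifting))
    interpret disc sc ip0 ipH H a1 a2 "phi N" N "DD N" g "dmu + deps"
    proof (unfold_locales)
      show "cinner_on sc UNIV ip0" by (rule ip0)
      show "cinner_on sc H ipH" by (rule ipH)
      show "\<forall>v\<in>H. ipnorm ip0 v \<le> ipnorm ipH v" using norm_le unfolding n0e nHe .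
      show "sesq_on sc H a1" by (rule a1s)
      show "sesq_on sc H a2" by (rule a2s)
      show "\<forall>u\<in>H. \<forall>v\<in>H. cmod (a1 u v - a2 u v) \<le> (dmu + deps) * ipnorm ipH u * ipnorm ipH v" by (rule dbound)
      show "\<forall>j<N. phi N j \<in> H" using phi_in N by blast
      show "\<forall>V\<in>carrier_vec N. combo sc (phi N) V = 0 \<longrightarrow> V = 0\<^sub>v N" using phi_indep N by blast
      show "herm N (DD N)" by (rule DDh)
      show "\<forall>V\<in>carrier_vec N. ipnorm ipH (combo sc (phi N) V) = wnorm (DD N) V" using DD_norm N unfolding nHe by blast
      show "\<forall>u\<in>galerkin_space sc (phi N) N - {0}. \<forall>e>0. \<exists>v\<in>galerkin_space sc (phi N) N - {0}.
        (g - e) * ipnorm ipH u * ipnorm ipH v < cmod (a1 u v)" by (rule infs)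
      show "0 < g" by (rule gpos)
      show "0 \<le> dmu + deps" using dmu0 deps0 by simp
      show "dmu + deps \<le> g / 2" by (rule dg)
    qed
    have P1: "invertible_mat (A2 N)" unfolding A2_def a2_def[symmetric] using A2i(4) by simp
    have P2: "max (induced_norm N (DD N) (1\<^sub>m N - mat_inv N (A2 N) * A1 N))
         (induced_norm N (mat_inv N (DD N)) (1\<^sub>m N - A1 N * mat_inv N (A2 N)))
       \<le> 2 * (dmu + deps) * C1 * invA1"
      unfolding A1_def A2_def a1_def[symmetric] a2_def[symmetric] g2[symmetric]
      using boundB boundC by simp
    have P3: "max (induced_norm2 N (1\<^sub>m N - mat_inv N (A2 N) * A1 N))
           (induced_norm2 N (1\<^sub>m N - A1 N * mat_inv N (A2 N)))
         \<le> 2 * (mp N / mm N) * deps * C1 * invA1" if mu: "mu1inv = mu2inv"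
    proof -
      have dmz: "dmu = 0"
      proof -
        have n00: "ipnorm ip0 0 = 0" using ipn_zero[OF ip0] by simp
        have "{ipnorm ip0 (mu1inv x - mu2inv x) |x. x \<in> UNIV \<and> ipnorm ip0 x \<le> 1} = {0}"
          using mu n00 by (auto intro!: exI[of _ "0::'a"])
        then show ?thesis unfolding dmu_def op_norm_def by simp
      qed
      have db0: "\<forall>u\<in>H. \<forall>v\<in>H. cmod (a1 u v - a2 u v) \<le> (dmu + deps) * ipnorm ip0 u * ipnorm ip0 v"
        using dgen dmz by simp
      have mpos: "0 < mm N" "0 < mp N" using m_pos N by auto
      have mb: "\<forall>V\<in>carrier_vec N. mm N * norm2 V \<le> ipnorm ip0 (combo sc (phi N) V) \<and> ipnorm ip0 (combo sc (phi N) V) \<le> mp N * norm2 V"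
        using m_bounds N unfolding n0e by blast
      have e: "\<And>x. 2 * (mp N / mm N) * x / g = 2 * (mp N / mm N) * x * C1 * invA1" unfolding g_def by simp
      show ?thesis
        unfolding A1_def A2_def a1_def[symmetric] a2_def[symmetric]
        using part2[OF db0 mpos mb] unfolding e dmz by simp
    qed
    show "invertible_mat (A2 N) \<and>
     max (induced_norm N (DD N) (1\<^sub>m N - mat_inv N (A2 N) * A1 N))
         (induced_norm N (mat_inv N (DD N)) (1\<^sub>m N - A1 N * mat_inv N (A2 N)))
       \<le> 2 * (dmu + deps) * C1 * invA1 \<and>
     (mu1inv = mu2inv \<longrightarrow>
       max (induced_norm2 N (1\<^sub>m N - mat_inv N (A2 N) * A1 N))
           (induced_norm2 N (1\<^sub>m N - A1 N * mat_inv N (A2 N)))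
         \<le> 2 * (mp N / mm N) * deps * C1 * invA1)"
      using P1 P2 P3 by blast
  qed
qed

end
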